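(* For every real number $r\geq 0$ there exists a finite-dimensional radical square zero algebra $A$ of the form $\Bbbk Q/(\geq 2)$, $Q$ a finite quiver, such that $\operatorname{fpd}(A\text{-mod})$ is irrational and $\operatorname{fpd}(A\text{-mod})>r$.
   Context: $\Bbbk$ is an algebraically closed field; $(\geq 2)$ is the ideal of the path algebra generated by paths of length $\geq 2$; $A\text{-mod}$ is the category of finite-dimensional left $A$-modules. For a $\Bbbk$-linear abelian category $\mathcal C$: an object $M$ is a brick if $\mathrm{Hom}(M,M)=\Bbbk$; a finite set $\phi=\{X_1,\dots,X_k\}$ of nonzero objects is a brick set if each $X_i$ is a brick and $\dim\mathrm{Hom}(X_i,X_j)=\delta_{ij}$; its adjacency matrix is $A(\phi)=(\dim\mathrm{Ext}^1_{\mathcal C}(X_i,X_j))_{i,j}$; and $\operatorname{fpd}(\mathcal C)=\sup_{\phi}\rho(A(\phi))$, the supremum over all brick sets of the spectral radius $\rho$. *)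

theory Defs
  imports "Jordan_Normal_Form.Spectral_Radius" "HOL-Library.Function_Algebras"
    "HOL-Computational_Algebra.Polynomial" "HOL-Library.Extended_Real"
begin

text \<open>A finite quiver: number of vertices n (vertices 0..n-1) and a list of arrows,
  arrow number a going from fst (arrows ! a) to snd (arrows ! a).
  Multiple arrows and loops are allowed.\<close>
type_synonym quiver = "nat \<times> (nat \<times> nat) list"

definition nverts :: "quiver \<Rightarrow> nat" where "nverts Q = fst Q"
definition narrs :: "quiver \<Rightarrow> nat" where "narrs Q = length (snd Q)"
definition src :: "quiver \<Rightarrow> nat \<Rightarrow> nat" where "src Q a = fst (snd Q ! a)"
definition tgt :: "quiver \<Rightarrow> nat \<Rightarrow> nat" where "tgt Q a = snd (snd Q ! a)"

definition finite_quiver :: "quiver \<Rightarrow> bool" where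
  "finite_quiver Q \<longleftrightarrow> (\<forall>a<narrs Q. src Q a < nverts Q \<and> tgt Q a < nverts Q)"

definition alg_closed :: "'k::field itself \<Rightarrow> bool" where
  "alg_closed _ \<longleftrightarrow> (\<forall>p :: 'k poly. degree p > 0 \<longrightarrow> (\<exists>x. poly p x = 0))"

text \<open>Finite-dimensional modules over kQ/(paths of length >= 2) = representations of Q
  in which every composite of two consecutive arrows acts as zero.\<close>
record 'k rep =
  dimv :: "nat \<Rightarrow> nat"
  maps :: "nat \<Rightarrow> 'k mat"

definition is_rep :: "quiver \<Rightarrow> 'k::field rep \<Rightarrow> bool" where
  "is_rep Q M \<longleftrightarrow>
     (\<forall>v. nverts Q \<le> v \<longrightarrow> dimv M v = 0) \<and>
     (\<forall>a<narrs Q. maps M a \<in> carrier_mat (dimv M (tgt Q a)) (dimv M (src Q a))) \<and>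
     (\<forall>a<narrs Q. \<forall>b<narrs Q. tgt Q a = src Q b \<longrightarrow>
        maps M b * maps M a = 0\<^sub>m (dimv M (tgt Q b)) (dimv M (src Q a)))"

definition nonzero_rep :: "quiver \<Rightarrow> 'k::field rep \<Rightarrow> bool" where
  "nonzero_rep Q M \<longleftrightarrow> (\<exists>v<nverts Q. dimv M v > 0)"

definition tomat :: "nat \<Rightarrow> nat \<Rightarrow> (nat \<Rightarrow> nat \<Rightarrow> 'k) \<Rightarrow> 'k mat" where
  "tomat r c f = mat r c (\<lambda>(i, j). f i j)"

definition scale3 :: "'k::field \<Rightarrow> (nat \<Rightarrow> nat \<Rightarrow> nat \<Rightarrow> 'k) \<Rightarrow> (nat \<Rightarrow> nat \<Rightarrow> nat \<Rightarrow> 'k)" where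
  "scale3 c f = (\<lambda>v i j. c * f v i j)"

definition kdim :: "(nat \<Rightarrow> nat \<Rightarrow> nat \<Rightarrow> 'k::field) set \<Rightarrow> nat" where
  "kdim S = vector_space.dim scale3 S"

text \<open>Hom(X,Y): families of linear maps f_v : X_v \<rightarrow> Y_v (as matrices), commuting with arrows.\<close>
definition homs :: "quiver \<Rightarrow> 'k::field rep \<Rightarrow> 'k rep \<Rightarrow> (nat \<Rightarrow> nat \<Rightarrow> nat \<Rightarrow> 'k) set" where
  "homs Q X Y = {f.
     (\<forall>v i j. \<not> (v < nverts Q \<and> i < dimv Y v \<and> j < dimv X v) \<longrightarrow> f v i j = 0) \<and>
     (\<forall>a<narrs Q.
        maps Y a * tomat (dimv Y (src Q a)) (dimv X (src Q a)) (f (src Q a)) =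
        tomat (dimv Y (tgt Q a)) (dimv X (tgt Q a)) (f (tgt Q a)) * maps X a)}"

definition hom_dim :: "quiver \<Rightarrow> 'k::field rep \<Rightarrow> 'k rep \<Rightarrow> nat" where
  "hom_dim Q X Y = kdim (homs Q X Y)"

definition brick :: "quiver \<Rightarrow> 'k::field rep \<Rightarrow> bool" where
  "brick Q M \<longleftrightarrow> is_rep Q M \<and> nonzero_rep Q M \<and>
     homs Q M M = {(\<lambda>v i j. if v < nverts Q \<and> i < dimv M v \<and> i = j then c else 0) | c. True}"

text \<open>Ext^1(X,Y), classifying extensions 0 \<rightarrow> Y \<rightarrow> E \<rightarrow> X \<rightarrow> 0 with E_v = Y_v \<oplus> X_v and
  E_a = [[Y_a, d_a],[0, X_a]]: the space of families d_a : X_{s a} \<rightarrow> Y_{t a} such that E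
  satisfies the relations (cocycles), modulo those giving split extensions (coboundaries).\<close>
definition cocycles :: "quiver \<Rightarrow> 'k::field rep \<Rightarrow> 'k rep \<Rightarrow> (nat \<Rightarrow> nat \<Rightarrow> nat \<Rightarrow> 'k) set" where
  "cocycles Q X Y = {d.
     (\<forall>a i j. \<not> (a < narrs Q \<and> i < dimv Y (tgt Q a) \<and> j < dimv X (src Q a)) \<longrightarrow> d a i j = 0) \<and>
     (\<forall>a<narrs Q. \<forall>b<narrs Q. tgt Q a = src Q b \<longrightarrow>
        maps Y b * tomat (dimv Y (tgt Q a)) (dimv X (src Q a)) (d a) +
        tomat (dimv Y (tgt Q b)) (dimv X (src Q b)) (d b) * maps X a
        = 0\<^sub>m (dimv Y (tgt Q b)) (dimv X (src Q a)))}"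

definition coboundaries :: "quiver \<Rightarrow> 'k::field rep \<Rightarrow> 'k rep \<Rightarrow> (nat \<Rightarrow> nat \<Rightarrow> nat \<Rightarrow> 'k) set" where
  "coboundaries Q X Y = {d. \<exists>h.
     (\<forall>a i j. d a i j =
        (if a < narrs Q \<and> i < dimv Y (tgt Q a) \<and> j < dimv X (src Q a) then
          (maps Y a * tomat (dimv Y (src Q a)) (dimv X (src Q a)) (h (src Q a))
           - tomat (dimv Y (tgt Q a)) (dimv X (tgt Q a)) (h (tgt Q a)) * maps X a) $$ (i, j)
         else 0))}"

definition ext1_dim :: "quiver \<Rightarrow> 'k::field rep \<Rightarrow> 'k rep \<Rightarrow> nat" where
  "ext1_dim Q X Y = kdim (cocycles Q X Y) - kdim (coboundaries Q X Y)"

definition brick_set :: "quiver \<Rightarrow> 'k::field rep list \<Rightarrow> bool" where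
  "brick_set Q Xs \<longleftrightarrow> Xs \<noteq> [] \<and> (\<forall>X\<in>set Xs. brick Q X) \<and>
     (\<forall>i<length Xs. \<forall>j<length Xs. i \<noteq> j \<longrightarrow> hom_dim Q (Xs ! i) (Xs ! j) = 0)"

definition adj_mat :: "quiver \<Rightarrow> 'k::field rep list \<Rightarrow> complex mat" where
  "adj_mat Q Xs = mat (length Xs) (length Xs) (\<lambda>(i, j). of_nat (ext1_dim Q (Xs ! i) (Xs ! j)))"

definition fpd :: "'k::field itself \<Rightarrow> quiver \<Rightarrow> ereal" where
  "fpd _ Q = (SUP Xs \<in> {Xs :: 'k rep list. brick_set Q Xs}. ereal (spectral_radius (adj_mat Q Xs)))"

end

theory Submission
  imports Defs
begin

lemma vs_scale3: "vector_space (scale3 :: 'k::field \<Rightarrow> _)"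
  by unfold_locales (auto simp: scale3_def fun_eq_iff algebra_simps)

global_interpretation V3: vector_space "scale3 :: 'k::field \<Rightarrow> _"
  by (rule vs_scale3)

lemma kdim_V3: "kdim S = V3.dim S"
  unfolding kdim_def by simp

definition ind3 :: "nat \<times> nat \<times> nat \<Rightarrow> nat \<Rightarrow> nat \<Rightarrow> nat \<Rightarrow> 'k::field" where
  "ind3 k = (\<lambda>v i j. if (v,i,j) = k then 1 else 0)"

definition supp3 :: "(nat \<times> nat \<times> nat) set \<Rightarrow> (nat \<Rightarrow> nat \<Rightarrow> nat \<Rightarrow> 'k::field) set" where
  "supp3 K = {d. \<forall>v i j. (v,i,j) \<notin> K \<longrightarrow> d v i j = 0}"

lemma sum_fun3: "(\<Sum>x\<in>A. (f x :: nat \<Rightarrow> nat \<Rightarrow> nat \<Rightarrow> 'k::field)) v i j = (\<Sum>x\<in>A. f x v i j)"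
  by (induction A rule: infinite_finite_induct) auto

lemma supp3_span:
  assumes "finite K"
  shows "supp3 K \<subseteq> V3.span ((ind3 :: _ \<Rightarrow> _ \<Rightarrow> _ \<Rightarrow> _ \<Rightarrow> 'k::field) ` K)"
proof
  fix d :: "nat \<Rightarrow> nat \<Rightarrow> nat \<Rightarrow> 'k" assume d: "d \<in> supp3 K"
  have eq: "d = (\<Sum>k\<in>K. scale3 (d (fst k) (fst (snd k)) (snd (snd k))) (ind3 k))"
  proof (intro ext)
    fix v i j
    have "(\<Sum>k\<in>K. scale3 (d (fst k) (fst (snd k)) (snd (snd k))) (ind3 k)) v i j
        = (\<Sum>k\<in>K. if k = (v,i,j) then d v i j else 0)"
      unfolding sum_fun3 by (intro sum.cong) (auto simp: scale3_def ind3_def)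
    also have "\<dots> = (if (v,i,j) \<in> K then d v i j else 0)"
      using assms by (simp add: sum.delta')
    also have "\<dots> = d v i j" using d by (auto simp: supp3_def)
    finally show "d v i j = (\<Sum>k\<in>K. scale3 (d (fst k) (fst (snd k)) (snd (snd k))) (ind3 k)) v i j" by simp
  qed
  show "d \<in> V3.span (ind3 ` K)"
    by (subst eq, intro V3.span_sum V3.span_scale V3.span_base) auto
qed

lemma ind3_inj: "inj (ind3 :: _ \<Rightarrow> _ \<Rightarrow> _ \<Rightarrow> _ \<Rightarrow> 'k::field)"
  by (auto simp: inj_def ind3_def fun_eq_iff split: if_splits)

lemma card_ind3: "card ((ind3 :: _ \<Rightarrow> _ \<Rightarrow> _ \<Rightarrow> _ \<Rightarrow> 'k::field) ` K) = card K"
  by (rule card_image[OF inj_on_subset[OF ind3_inj subset_UNIV]])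

lemma ind3_indep:
  "V3.independent ((ind3 :: _ \<Rightarrow> _ \<Rightarrow> _ \<Rightarrow> _ \<Rightarrow> 'k::field) ` K)"
proof -
  show ?thesis
  unfolding V3.dependent_explicit
  proof (rule notI, elim exE conjE bexE)
    fix T u v assume T: "finite T" "T \<subseteq> ind3 ` K" and s: "(\<Sum>v\<in>T. scale3 (u v) v) = (0 :: nat \<Rightarrow> nat \<Rightarrow> nat \<Rightarrow> 'k)"
      and v: "v \<in> T" "u v \<noteq> 0"
    obtain k where k: "v = ind3 k" using T v by auto
    have "0 = (\<Sum>w\<in>T. scale3 (u w) w) (fst k) (fst (snd k)) (snd (snd k))" using s by simp
    also have "\<dots> = (\<Sum>w\<in>T. if w = v then u v else 0)"
      unfolding sum_fun3
    proof (intro sum.cong refl)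
      fix w assume "w \<in> T"
      then obtain k' where k': "w = ind3 k'" using T by auto
      show "scale3 (u w) w (fst k) (fst (snd k)) (snd (snd k)) = (if w = v then u v else 0)"
      proof (cases "k' = k")
        case True then show ?thesis using k k' by (simp add: scale3_def ind3_def)
      next
        case False
        then have "w \<noteq> v" using k k' injD[OF ind3_inj] by metis
        then show ?thesis using k k' False by (cases k; cases k'; auto simp: scale3_def ind3_def)
      qed
    qed
    also have "\<dots> = u v" using T v by (simp add: sum.delta')
    finally show False using v by simp
  qed
qed

lemma kdim_le:
  assumes "finite K" "S \<subseteq> (supp3 K :: (nat \<Rightarrow> nat \<Rightarrow> nat \<Rightarrow> 'k::field) set)"
  shows "kdim S \<le> card K"
proof -
  have "kdim S \<le> card ((ind3 :: _ \<Rightarrow> _ \<Rightarrow> _ \<Rightarrow> _ \<Rightarrow> 'k) ` K)"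
    unfolding kdim_V3 using assms supp3_span[OF assms(1)] by (intro V3.dim_le_card) auto
  also have "\<dots> = card K" using card_ind3 by simp
  finally show ?thesis .
qed

lemma kdim_ge:
  assumes "finite K" "S \<subseteq> (supp3 K :: (nat \<Rightarrow> nat \<Rightarrow> nat \<Rightarrow> 'k::field) set)"
    and "T \<subseteq> S" "V3.independent T"
  shows "card T \<le> kdim S"
proof -
  obtain B where B: "T \<subseteq> B" "B \<subseteq> S" "V3.independent B" "S \<subseteq> V3.span B"
    using V3.maximal_independent_subset_extend[OF assms(3,4)] by blast
  have Bs: "B \<subseteq> V3.span (ind3 ` K)" using B assms supp3_span[OF assms(1)] by blast
  have "finite B" using V3.independent_span_bound[OF _ B(3) Bs] assms(1) by auto
  then have "card T \<le> card B" using B by (simp add: card_mono)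
  also have "card B = kdim S" unfolding kdim_V3 using V3.basis_card_eq_dim B by auto
  finally show ?thesis .
qed

lemma kdim_pos:
  assumes "finite K" "S \<subseteq> (supp3 K :: (nat \<Rightarrow> nat \<Rightarrow> nat \<Rightarrow> 'k::field) set)"
    and "x \<in> S" "x \<noteq> 0"
  shows "kdim S \<noteq> 0"
proof -
  have "card {x} \<le> kdim S"
    using assms by (intro kdim_ge[OF assms(1,2)]) (auto simp: V3.independent_insert V3.span_empty)
  then show ?thesis by simp
qed

lemma kdim_zero:
  assumes "S \<subseteq> {0 :: nat \<Rightarrow> nat \<Rightarrow> nat \<Rightarrow> 'k::field}"
  shows "kdim S = 0"
proof -
  have "S \<subseteq> supp3 {}" using assms by (auto simp: supp3_def)
  from kdim_le[OF _ this] show ?thesis by simp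
qed

lemma kdim_eq:
  assumes "finite K" "S = (supp3 K :: (nat \<Rightarrow> nat \<Rightarrow> nat \<Rightarrow> 'k::field) set)"
  shows "kdim S = card K"
proof -
  have sub: "ind3 ` K \<subseteq> S" using assms by (auto simp: supp3_def ind3_def)
  have "card (ind3 ` K :: (nat \<Rightarrow> nat \<Rightarrow> nat \<Rightarrow> 'k) set) \<le> kdim S"
    using kdim_ge[OF assms(1) _ sub ind3_indep] assms by simp
  then have "card K \<le> kdim S" by (simp add: card_ind3)
  moreover have "kdim S \<le> card K" using kdim_le[OF assms(1), of S] assms by simp
  ultimately show ?thesis by simp
qed



definition Qm :: "nat \<Rightarrow> quiver" where
  "Qm m = (2, replicate m (0,0) @ [(0,1),(1,0)])"

lemma Qm_nverts[simp]: "nverts (Qm m) = 2" by (simp add: Qm_def nverts_def)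
lemma Qm_narrs[simp]: "narrs (Qm m) = Suc (Suc m)" by (simp add: Qm_def narrs_def)
lemma Qm_loop[simp]: "a < m \<Longrightarrow> src (Qm m) a = 0" "a < m \<Longrightarrow> tgt (Qm m) a = 0"
  by (auto simp: Qm_def src_def tgt_def nth_append)
lemma Qm_gam[simp]: "src (Qm m) m = 0" "tgt (Qm m) m = 1"
  by (auto simp: Qm_def src_def tgt_def nth_append)
lemma Qm_del[simp]: "src (Qm m) (Suc m) = 1" "tgt (Qm m) (Suc m) = 0"
  by (auto simp: Qm_def src_def tgt_def nth_append)
lemma Qm_finite: "finite_quiver (Qm m)"
  unfolding finite_quiver_def
proof (intro allI impI)
  fix a assume "a < narrs (Qm m)"
  then have "a < m \<or> a = m \<or> a = Suc m" by auto
  then show "src (Qm m) a < nverts (Qm m) \<and> tgt (Qm m) a < nverts (Qm m)" by auto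
qed

lemma arr_split: "a < narrs (Qm m) \<Longrightarrow> a < m \<or> a = m \<or> a = Suc m"
  by auto

lemma arr_cases: "a < Suc (Suc m) \<Longrightarrow> (a < m \<Longrightarrow> P) \<Longrightarrow> (a = m \<Longrightarrow> P) \<Longrightarrow> (a = Suc m \<Longrightarrow> P) \<Longrightarrow> P"
  by linarith

lemma tomat_carrier[simp]: "tomat r c f \<in> carrier_mat r c"
  by (simp add: tomat_def)

lemma tomat_dims[simp]: "dim_row (tomat r c f) = r" "dim_col (tomat r c f) = c"
  by (simp_all add: tomat_def)

lemma tomat_index[simp]: "i < r \<Longrightarrow> j < c \<Longrightarrow> tomat r c f $$ (i,j) = f i j"
  by (simp add: tomat_def)

definition zmaps :: "quiver \<Rightarrow> 'k::field rep \<Rightarrow> bool" where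
  "zmaps Q X \<longleftrightarrow> (\<forall>a<narrs Q. maps X a = 0\<^sub>m (dimv X (tgt Q a)) (dimv X (src Q a)))"

lemma homs_zero:
  assumes "zmaps Q X" "zmaps Q Y"
  shows "homs Q X Y = {f. \<forall>v i j. \<not> (v < nverts Q \<and> i < dimv Y v \<and> j < dimv X v) \<longrightarrow> f v i j = 0}"
  using assms unfolding homs_def zmaps_def
  by (auto simp: left_mult_zero_mat[OF tomat_carrier] right_mult_zero_mat[OF tomat_carrier])

lemma cocycles_zero:
  assumes "zmaps Q X" "zmaps Q Y"
  shows "cocycles Q X Y = {d. \<forall>a i j. \<not> (a < narrs Q \<and> i < dimv Y (tgt Q a) \<and> j < dimv X (src Q a)) \<longrightarrow> d a i j = 0}"
  using assms unfolding cocycles_def zmaps_def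
  by (auto simp: left_mult_zero_mat[OF tomat_carrier] right_mult_zero_mat[OF tomat_carrier])

lemma coboundaries_zero:
  assumes "zmaps Q X" "zmaps Q Y"
  shows "coboundaries Q X Y \<subseteq> {0}"
proof
  fix d assume "d \<in> coboundaries Q X Y"
  then obtain h where h: "\<And>a i j. d a i j =
        (if a < narrs Q \<and> i < dimv Y (tgt Q a) \<and> j < dimv X (src Q a) then
          (maps Y a * tomat (dimv Y (src Q a)) (dimv X (src Q a)) (h (src Q a))
           - tomat (dimv Y (tgt Q a)) (dimv X (tgt Q a)) (h (tgt Q a)) * maps X a) $$ (i, j)
         else 0)" unfolding coboundaries_def by blast
  have "d a i j = 0" for a i j
    using assms unfolding h zmaps_def
    by (auto simp: left_mult_zero_mat[OF tomat_carrier] right_mult_zero_mat[OF tomat_carrier])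
  then show "d \<in> {0}" by (auto simp: fun_eq_iff)
qed

definition mk2 :: "'k::field mat \<Rightarrow> 'k mat \<Rightarrow> nat \<Rightarrow> nat \<Rightarrow> nat \<Rightarrow> 'k" where
  "mk2 F0 F1 = (\<lambda>v i j. if v = 0 \<and> i < dim_row F0 \<and> j < dim_col F0 then F0 $$ (i,j)
     else if v = 1 \<and> i < dim_row F1 \<and> j < dim_col F1 then F1 $$ (i,j) else 0)"

lemma tomat_mk2:
  "F0 \<in> carrier_mat r c \<Longrightarrow> tomat r c (mk2 F0 F1 0) = F0"
  "F1 \<in> carrier_mat r c \<Longrightarrow> tomat r c (mk2 F0 F1 1) = F1"
  by (auto simp: tomat_def mk2_def)

lemma rep_facts:
  assumes "is_rep (Qm m) X"
  shows "\<And>a. a < m \<Longrightarrow> maps X a \<in> carrier_mat (dimv X 0) (dimv X 0)"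
    "maps X m \<in> carrier_mat (dimv X 1) (dimv X 0)"
    "maps X (Suc m) \<in> carrier_mat (dimv X 0) (dimv X 1)"
    "\<And>a b. a < m \<Longrightarrow> b < m \<Longrightarrow> maps X b * maps X a = 0\<^sub>m (dimv X 0) (dimv X 0)"
    "\<And>a. a < m \<Longrightarrow> maps X m * maps X a = 0\<^sub>m (dimv X 1) (dimv X 0)"
    "\<And>a. a < m \<Longrightarrow> maps X a * maps X (Suc m) = 0\<^sub>m (dimv X 0) (dimv X 1)"
    "maps X (Suc m) * maps X m = 0\<^sub>m (dimv X 0) (dimv X 0)"
    "maps X m * maps X (Suc m) = 0\<^sub>m (dimv X 1) (dimv X 1)"
    "\<And>v. v \<ge> 2 \<Longrightarrow> dimv X v = 0"
proof -
  have c: "\<And>a. a < Suc (Suc m) \<Longrightarrow> maps X a \<in> carrier_mat (dimv X (tgt (Qm m) a)) (dimv X (src (Qm m) a))"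
    and r: "\<And>a b. a < Suc (Suc m) \<Longrightarrow> b < Suc (Suc m) \<Longrightarrow> tgt (Qm m) a = src (Qm m) b \<Longrightarrow>
        maps X b * maps X a = 0\<^sub>m (dimv X (tgt (Qm m) b)) (dimv X (src (Qm m) a))"
    and d: "\<And>v. 2 \<le> v \<Longrightarrow> dimv X v = 0"
    using assms unfolding is_rep_def by auto
  show "\<And>a. a < m \<Longrightarrow> maps X a \<in> carrier_mat (dimv X 0) (dimv X 0)"
  proof -
    fix a assume "a < m" with c[of a] show "maps X a \<in> carrier_mat (dimv X 0) (dimv X 0)" by simp
  qed
  show "maps X m \<in> carrier_mat (dimv X 1) (dimv X 0)" using c[of m] by simp
  show "maps X (Suc m) \<in> carrier_mat (dimv X 0) (dimv X 1)" using c[of "Suc m"] by simp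
  show "\<And>a b. a < m \<Longrightarrow> b < m \<Longrightarrow> maps X b * maps X a = 0\<^sub>m (dimv X 0) (dimv X 0)"
    using r by fastforce
  show "\<And>a. a < m \<Longrightarrow> maps X m * maps X a = 0\<^sub>m (dimv X 1) (dimv X 0)"
    using r by fastforce
  show "\<And>a. a < m \<Longrightarrow> maps X a * maps X (Suc m) = 0\<^sub>m (dimv X 0) (dimv X 1)"
    using r by fastforce
  show "maps X (Suc m) * maps X m = 0\<^sub>m (dimv X 0) (dimv X 0)" using r[of m "Suc m"] by simp
  show "maps X m * maps X (Suc m) = 0\<^sub>m (dimv X 1) (dimv X 1)" using r[of "Suc m" m] by simp
  show "\<And>v. v \<ge> 2 \<Longrightarrow> dimv X v = 0" using d by simp
qed

lemma brick_endo:
  assumes b: "brick (Qm m) X"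
    and F0: "F0 \<in> carrier_mat (dimv X 0) (dimv X 0)" and F1: "F1 \<in> carrier_mat (dimv X 1) (dimv X 1)"
    and cL: "\<And>a. a < m \<Longrightarrow> maps X a * F0 = F0 * maps X a"
    and cG: "maps X m * F0 = F1 * maps X m"
    and cD: "maps X (Suc m) * F1 = F0 * maps X (Suc m)"
  shows "\<exists>c. (\<forall>i<dimv X 0. \<forall>j<dimv X 0. F0 $$ (i,j) = (if i = j then c else 0)) \<and>
             (\<forall>i<dimv X 1. \<forall>j<dimv X 1. F1 $$ (i,j) = (if i = j then c else 0))"
proof -
  have t0: "tomat (dimv X 0) (dimv X 0) (mk2 F0 F1 0) = F0" using tomat_mk2(1)[OF F0] .
  have t1: "tomat (dimv X 1) (dimv X 1) (mk2 F0 F1 1) = F1" using tomat_mk2(2)[OF F1] .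
  have t1': "tomat (dimv X (Suc 0)) (dimv X (Suc 0)) (mk2 F0 F1 (Suc 0)) = F1" using t1 by simp
  have "mk2 F0 F1 \<in> homs (Qm m) X X"
    unfolding homs_def
  proof (intro CollectI conjI allI impI)
    fix v i j assume "\<not> (v < nverts (Qm m) \<and> i < dimv X v \<and> j < dimv X v)"
    then show "mk2 F0 F1 v i j = 0" using F0 F1 by (auto simp: mk2_def)
  next
    fix a assume a: "a < narrs (Qm m)"
    show "maps X a * tomat (dimv X (src (Qm m) a)) (dimv X (src (Qm m) a)) (mk2 F0 F1 (src (Qm m) a)) =
          tomat (dimv X (tgt (Qm m) a)) (dimv X (tgt (Qm m) a)) (mk2 F0 F1 (tgt (Qm m) a)) * maps X a"
      using arr_split[OF a] by (auto simp: t0 t1' cL cG cD)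
  qed
  then obtain c where "mk2 F0 F1 = (\<lambda>v i j. if v < nverts (Qm m) \<and> i < dimv X v \<and> i = j then c else 0)"
    using b unfolding brick_def by auto
  then have e: "\<And>v i j. mk2 F0 F1 v i j = (if v < 2 \<and> i < dimv X v \<and> i = j then c else 0)"
    by (simp add: fun_eq_iff)
  show ?thesis
  proof (intro exI conjI allI impI)
    fix i j assume "i < dimv X 0" "j < dimv X 0"
    then show "F0 $$ (i,j) = (if i = j then c else 0)" using e[of 0 i j] F0 by (auto simp: mk2_def)
  next
    fix i j assume "i < dimv X 1" "j < dimv X 1"
    then show "F1 $$ (i,j) = (if i = j then c else 0)" using e[of 1 i j] F0 F1 by (auto simp: mk2_def)
  qed
qed



lemma sum_delta_mult1: "i < (n::nat) \<Longrightarrow> (\<Sum>k = 0..<n. (if k = i then 1 else 0) * (f k :: 'k::field)) = f i"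
  by (simp add: if_distrib[of "\<lambda>x. x * _"] sum.delta sum.delta' cong: if_cong)

lemma sum_delta_mult2: "i < (n::nat) \<Longrightarrow> (\<Sum>k = 0..<n. (f k :: 'k::field) * (if k = i then 1 else 0)) = f i"
  by (simp add: if_distrib[of "\<lambda>x. _ * x"] sum.delta sum.delta' cong: if_cong)

lemma HG_entry:
  assumes G: "G \<in> carrier_mat d1 d0" and i: "i < d1" and a: "a < d0" and b: "b < d0"
  shows "(mat d0 d1 (\<lambda>(p,q). if p = j \<and> q = i then 1 else 0) * G) $$ (a,b) = (if a = j then G $$ (i,b) else (0::'k::field))"
proof -
  have "(mat d0 d1 (\<lambda>(p,q). if p = j \<and> q = i then 1 else 0) * G) $$ (a,b)
     = (\<Sum>k = 0..<d1. (if a = j \<and> k = i then 1 else 0) * G $$ (k,b))"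
    using G a b by (simp add: scalar_prod_def)
  also have "\<dots> = (if a = j then G $$ (i,b) else 0)"
  proof (cases "a = j")
    case True then show ?thesis using sum_delta_mult1[OF i, of "\<lambda>k. G $$ (k,b)"] by simp
  qed simp
  finally show ?thesis .
qed

lemma GH_entry:
  assumes G: "G \<in> carrier_mat d1 d0" and j: "j < d0" and a: "a < d1" and b: "b < d1"
  shows "(G * mat d0 d1 (\<lambda>(p,q). if p = j \<and> q = i then 1 else 0)) $$ (a,b) = (if b = i then G $$ (a,j) else (0::'k::field))"
proof -
  have "(G * mat d0 d1 (\<lambda>(p,q). if p = j \<and> q = i then 1 else 0)) $$ (a,b)
     = (\<Sum>k = 0..<d0. G $$ (a,k) * (if k = j \<and> b = i then 1 else 0))"
    using G a b by (simp add: scalar_prod_def)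
  also have "\<dots> = (if b = i then G $$ (a,j) else 0)"
  proof (cases "b = i")
    case True then show ?thesis using sum_delta_mult2[OF j, of "\<lambda>k. G $$ (a,k)"] by simp
  qed simp
  finally show ?thesis .
qed

lemma brick_rep: "brick Q X \<Longrightarrow> is_rep Q X" by (simp add: brick_def)

lemma loops_zero:
  assumes b: "brick (Qm m) X" and a: "a < m"
  shows "maps X a = 0\<^sub>m (dimv X 0) (dimv X 0)"
proof -
  note R = rep_facts[OF brick_rep[OF b]]
  define d0 where "d0 = dimv X 0"
  define d1 where "d1 = dimv X 1"
  define L where "L = maps X a"
  have L: "L \<in> carrier_mat d0 d0" using R(1)[OF a] by (simp add: L_def d0_def)
  have LL: "L * L = 0\<^sub>m d0 d0" using R(4)[OF a a] by (simp add: L_def d0_def)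
  obtain c where c0: "\<forall>i<d0. \<forall>j<d0. L $$ (i,j) = (if i = j then c else 0)"
    and c1: "\<forall>i<d1. \<forall>j<d1. (0\<^sub>m d1 d1 :: 'a mat) $$ (i,j) = (if i = j then c else 0)"
  proof -
    have "\<exists>c. (\<forall>i<dimv X 0. \<forall>j<dimv X 0. L $$ (i,j) = (if i = j then c else 0)) \<and>
             (\<forall>i<dimv X 1. \<forall>j<dimv X 1. (0\<^sub>m d1 d1 :: 'a mat) $$ (i,j) = (if i = j then c else 0))"
    proof (rule brick_endo[OF b])
      show "L \<in> carrier_mat (dimv X 0) (dimv X 0)" using L by (simp add: d0_def)
      show "0\<^sub>m d1 d1 \<in> carrier_mat (dimv X 1) (dimv X 1)" by (simp add: d1_def)
      fix b assume "b < m"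
      then show "maps X b * L = L * maps X b" using R(4)[OF a \<open>b < m\<close>] R(4)[OF \<open>b < m\<close> a] by (simp add: L_def)
    next
      show "maps X m * L = 0\<^sub>m d1 d1 * maps X m" using R(5)[OF a] R(2) by (simp add: L_def d1_def)
    next
      show "maps X (Suc m) * 0\<^sub>m d1 d1 = L * maps X (Suc m)" using R(6)[OF a] R(3) by (simp add: L_def d1_def)
    qed
    then show ?thesis using that by (auto simp: d0_def d1_def)
  qed
  have "d0 = 0 \<or> c = 0"
  proof (cases "d1 = 0")
    case False
    then have "c = 0" using c1 by (metis index_zero_mat(1) not_gr_zero)
    then show ?thesis by simp
  next
    case True
    show ?thesis
    proof (cases "d0 = 0")
      case False
      then have "(L * L) $$ (0,0) = 0" using LL by simp
      moreover have "(L * L) $$ (0,0) = (\<Sum>k = 0..<d0. (if k = 0 then c else 0) * L $$ (k,0))"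
        using L False c0 by (auto simp: scalar_prod_def intro!: sum.cong)
      moreover have "\<dots> = c * c"
        using False c0 by (simp add: if_distrib[of "\<lambda>x. x * _"] sum.delta cong: if_cong)
      ultimately show ?thesis by simp
    qed simp
  qed
  show ?thesis unfolding L_def[symmetric] d0_def[symmetric]
    by (rule eq_matI) (use L c0 \<open>d0 = 0 \<or> c = 0\<close> in auto)
qed

lemma G_nonzero:
  assumes b: "brick (Qm m) X" and i: "i < dimv X 1" and j: "j < dimv X 0"
    and nz: "maps X m $$ (i,j) \<noteq> 0"
  shows "dimv X 0 = 1 \<and> dimv X 1 = 1"
proof -
  note R = rep_facts[OF brick_rep[OF b]]
  define d0 where "d0 = dimv X 0"
  define d1 where "d1 = dimv X 1"
  define G where "G = maps X m"
  define D where "D = maps X (Suc m)"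
  define H :: "'a mat" where "H = mat d0 d1 (\<lambda>(p,q). if p = j \<and> q = i then 1 else 0)"
  have G: "G \<in> carrier_mat d1 d0" using R(2) by (simp add: G_def d0_def d1_def)
  have D: "D \<in> carrier_mat d0 d1" using R(3) by (simp add: D_def d0_def d1_def)
  have H: "H \<in> carrier_mat d0 d1" by (simp add: H_def)
  have DG: "D * G = 0\<^sub>m d0 d0" using R(7) by (simp add: D_def G_def d0_def)
  have GD: "G * D = 0\<^sub>m d1 d1" using R(8) by (simp add: D_def G_def d1_def)
  have HG: "H * G \<in> carrier_mat d0 d0" using H G by simp
  have GH: "G * H \<in> carrier_mat d1 d1" using H G by simp
  obtain c where c0: "\<forall>a<d0. \<forall>b<d0. (H * G) $$ (a,b) = (if a = b then c else 0)"
    and c1: "\<forall>a<d1. \<forall>b<d1. (G * H) $$ (a,b) = (if a = b then c else 0)"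
  proof -
    have "\<exists>c. (\<forall>a<dimv X 0. \<forall>b<dimv X 0. (H * G) $$ (a,b) = (if a = b then c else 0)) \<and>
             (\<forall>a<dimv X 1. \<forall>b<dimv X 1. (G * H) $$ (a,b) = (if a = b then c else 0))"
    proof (rule brick_endo[OF b])
      show "H * G \<in> carrier_mat (dimv X 0) (dimv X 0)" using HG by (simp add: d0_def)
      show "G * H \<in> carrier_mat (dimv X 1) (dimv X 1)" using GH by (simp add: d1_def)
      fix a assume "a < m"
      then show "maps X a * (H * G) = (H * G) * maps X a"
      proof -
        have HG': "H * G \<in> carrier_mat (dimv X 0) (dimv X 0)" using HG by (simp add: d0_def)
        show ?thesis using loops_zero[OF b \<open>a < m\<close>] left_mult_zero_mat[OF HG'] right_mult_zero_mat[OF HG'] by simp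
      qed
    next
      show "maps X m * (H * G) = (G * H) * maps X m"
        unfolding G_def[symmetric] using G H by (simp add: assoc_mult_mat[of _ d1 d0 _ d1 _ d0])
    next
      have "D * (G * H) = (D * G) * H" using D G H by (simp add: assoc_mult_mat[of _ d0 d1 _ d0 _ d1])
      also have "\<dots> = 0\<^sub>m d0 d1" using DG H by simp
      also have "\<dots> = H * (G * D)" using GD H by simp
      also have "\<dots> = (H * G) * D" using D G H by (simp add: assoc_mult_mat[of _ d0 d1 _ d0 _ d1])
      finally show "maps X (Suc m) * (G * H) = (H * G) * maps X (Suc m)" unfolding D_def .
    qed
    then show ?thesis using that by (auto simp: d0_def d1_def)
  qed
  have i': "i < d1" and j': "j < d0" using i j by (simp_all add: d0_def d1_def)
  have "(H * G) $$ (j,j) = G $$ (i,j)" using HG_entry[OF G i' j' j', of j] by (simp add: H_def)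
  then have cG: "c = G $$ (i,j)" using c0 j' by simp
  have "d0 = 1"
  proof (rule ccontr)
    assume "d0 \<noteq> 1"
    define a where "a = (if j = 0 then 1 else (0::nat))"
    have a: "a < d0" "a \<noteq> j" using j' \<open>d0 \<noteq> 1\<close> unfolding a_def by auto
    have "(H * G) $$ (a,a) = 0" using HG_entry[OF G i' a(1) a(1), of j] a by (simp add: H_def)
    then have "c = 0" using c0 a by simp
    then show False using cG nz by (simp add: G_def)
  qed
  moreover have "d1 = 1"
  proof (rule ccontr)
    assume "d1 \<noteq> 1"
    define a where "a = (if i = 0 then 1 else (0::nat))"
    have a: "a < d1" "a \<noteq> i" using i' \<open>d1 \<noteq> 1\<close> unfolding a_def by auto
    have "(G * H) $$ (a,a) = 0" using GH_entry[OF G j' a(1) a(1), of i] a by (simp add: H_def)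
    then have "c = 0" using c1 a by simp
    then show False using cG nz by (simp add: G_def)
  qed
  ultimately show ?thesis by (simp add: d0_def d1_def)
qed

lemma D_nonzero:
  assumes b: "brick (Qm m) X" and i: "i < dimv X 0" and j: "j < dimv X 1"
    and nz: "maps X (Suc m) $$ (i,j) \<noteq> 0"
  shows "dimv X 0 = 1 \<and> dimv X 1 = 1"
proof -
  note R = rep_facts[OF brick_rep[OF b]]
  define d0 where "d0 = dimv X 0"
  define d1 where "d1 = dimv X 1"
  define G where "G = maps X m"
  define D where "D = maps X (Suc m)"
  define H :: "'a mat" where "H = mat d1 d0 (\<lambda>(p,q). if p = j \<and> q = i then 1 else 0)"
  have G: "G \<in> carrier_mat d1 d0" using R(2) by (simp add: G_def d0_def d1_def)
  have D: "D \<in> carrier_mat d0 d1" using R(3) by (simp add: D_def d0_def d1_def)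
  have H: "H \<in> carrier_mat d1 d0" by (simp add: H_def)
  have DG: "D * G = 0\<^sub>m d0 d0" using R(7) by (simp add: D_def G_def d0_def)
  have GD: "G * D = 0\<^sub>m d1 d1" using R(8) by (simp add: D_def G_def d1_def)
  have DH: "D * H \<in> carrier_mat d0 d0" using H D by simp
  have HD: "H * D \<in> carrier_mat d1 d1" using H D by simp
  obtain c where c0: "\<forall>a<d0. \<forall>b<d0. (D * H) $$ (a,b) = (if a = b then c else 0)"
    and c1: "\<forall>a<d1. \<forall>b<d1. (H * D) $$ (a,b) = (if a = b then c else 0)"
  proof -
    have "\<exists>c. (\<forall>a<dimv X 0. \<forall>b<dimv X 0. (D * H) $$ (a,b) = (if a = b then c else 0)) \<and>
             (\<forall>a<dimv X 1. \<forall>b<dimv X 1. (H * D) $$ (a,b) = (if a = b then c else 0))"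
    proof (rule brick_endo[OF b])
      show "D * H \<in> carrier_mat (dimv X 0) (dimv X 0)" using DH by (simp add: d0_def)
      show "H * D \<in> carrier_mat (dimv X 1) (dimv X 1)" using HD by (simp add: d1_def)
      fix a assume "a < m"
      then show "maps X a * (D * H) = (D * H) * maps X a"
      proof -
        have DH': "D * H \<in> carrier_mat (dimv X 0) (dimv X 0)" using DH by (simp add: d0_def)
        show ?thesis using loops_zero[OF b \<open>a < m\<close>] left_mult_zero_mat[OF DH'] right_mult_zero_mat[OF DH'] by simp
      qed
    next
      have "G * (D * H) = (G * D) * H" using D G H by (simp add: assoc_mult_mat[of _ d1 d0 _ d1 _ d0])
      also have "\<dots> = 0\<^sub>m d1 d0" using GD H by simp
      also have "\<dots> = H * (D * G)" using DG H by simp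
      also have "\<dots> = (H * D) * G" using D G H by (simp add: assoc_mult_mat[of _ d1 d0 _ d1 _ d0])
      finally show "maps X m * (D * H) = (H * D) * maps X m" unfolding G_def .
    next
      show "maps X (Suc m) * (H * D) = (D * H) * maps X (Suc m)"
        unfolding D_def[symmetric] using D H by (simp add: assoc_mult_mat[of _ d0 d1 _ d0 _ d1])
    qed
    then show ?thesis using that by (auto simp: d0_def d1_def)
  qed
  have i': "i < d0" and j': "j < d1" using i j by (simp_all add: d0_def d1_def)
  have "(D * H) $$ (i,i) = D $$ (i,j)" using GH_entry[OF D j' i' i', of i] by (simp add: H_def)
  then have cD: "c = D $$ (i,j)" using c0 i' by simp
  have "d0 = 1"
  proof (rule ccontr)
    assume "d0 \<noteq> 1"
    define a where "a = (if i = 0 then 1 else (0::nat))"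
    have a: "a < d0" "a \<noteq> i" using i' \<open>d0 \<noteq> 1\<close> unfolding a_def by auto
    have "(D * H) $$ (a,a) = 0" using GH_entry[OF D j' a(1) a(1), of i] a by (simp add: H_def)
    then have "c = 0" using c0 a by simp
    then show False using cD nz by (simp add: D_def)
  qed
  moreover have "d1 = 1"
  proof (rule ccontr)
    assume "d1 \<noteq> 1"
    define a where "a = (if j = 0 then 1 else (0::nat))"
    have a: "a < d1" "a \<noteq> j" using j' \<open>d1 \<noteq> 1\<close> unfolding a_def by auto
    have "(H * D) $$ (a,a) = 0" using HG_entry[OF D i' a(1) a(1), of j] a by (simp add: H_def)
    then have "c = 0" using c1 a by simp
    then show False using cD nz by (simp add: D_def)
  qed
  ultimately show ?thesis by (simp add: d0_def d1_def)
qed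

lemma zero_case:
  assumes b: "brick (Qm m) X"
    and G0: "maps X m = 0\<^sub>m (dimv X 1) (dimv X 0)"
    and D0: "maps X (Suc m) = 0\<^sub>m (dimv X 0) (dimv X 1)"
  shows "(dimv X 0 = 1 \<and> dimv X 1 = 0) \<or> (dimv X 0 = 0 \<and> dimv X 1 = 1)"
proof -
  define d0 where "d0 = dimv X 0"
  define d1 where "d1 = dimv X 1"
  have key: "\<exists>c. (\<forall>a<d0. \<forall>b<d0. F0 $$ (a,b) = (if a = b then c else 0)) \<and>
                 (\<forall>a<d1. \<forall>b<d1. F1 $$ (a,b) = (if a = b then c else 0))"
    if F0: "F0 \<in> carrier_mat d0 d0" and F1: "F1 \<in> carrier_mat d1 d1" for F0 F1 :: "'a mat"
  proof -
    have F0': "F0 \<in> carrier_mat (dimv X 0) (dimv X 0)" and F1': "F1 \<in> carrier_mat (dimv X 1) (dimv X 1)"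
      using F0 F1 by (simp_all add: d0_def d1_def)
    show ?thesis unfolding d0_def d1_def
    proof (rule brick_endo[OF b F0' F1'])
      fix a assume "a < m"
      show "maps X a * F0 = F0 * maps X a"
        using loops_zero[OF b \<open>a < m\<close>] left_mult_zero_mat[OF F0'] right_mult_zero_mat[OF F0'] by simp
    next
      show "maps X m * F0 = F1 * maps X m"
        unfolding G0 using left_mult_zero_mat[OF F0'] right_mult_zero_mat[OF F1'] by simp
    next
      show "maps X (Suc m) * F1 = F0 * maps X (Suc m)"
        unfolding D0 using left_mult_zero_mat[OF F1'] right_mult_zero_mat[OF F0'] by simp
    qed
  qed
  have nz: "d0 > 0 \<or> d1 > 0"
    using b unfolding brick_def nonzero_rep_def d0_def d1_def
    by (metis One_nat_def Qm_nverts less_2_cases)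
  show ?thesis
  proof (cases "d0 > 0")
    case True
    obtain c where c0: "\<forall>a<d0. \<forall>b<d0. (mat d0 d0 (\<lambda>(p,q). if p = 0 \<and> q = 0 then 1 else 0) :: 'a mat) $$ (a,b) = (if a = b then c else 0)"
      and c1: "\<forall>a<d1. \<forall>b<d1. (0\<^sub>m d1 d1 :: 'a mat) $$ (a,b) = (if a = b then c else 0)"
      using key[of "mat d0 d0 (\<lambda>(p,q). if p = 0 \<and> q = 0 then 1 else 0)" "0\<^sub>m d1 d1"] by auto
    have c: "c = 1" using c0[rule_format, of 0 0] True by simp
    have "d0 = 1"
    proof (rule ccontr)
      assume "d0 \<noteq> 1"
      then have "1 < d0" using True by simp
      then show False using c0 c by fastforce
    qed
    moreover have "d1 = 0"
    proof (rule ccontr)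
      assume "d1 \<noteq> 0"
      then show False using c1 c by fastforce
    qed
    ultimately show ?thesis by (simp add: d0_def d1_def)
  next
    case False
    then have True': "d1 > 0" "d0 = 0" using nz by auto
    obtain c where c1: "\<forall>a<d1. \<forall>b<d1. (mat d1 d1 (\<lambda>(p,q). if p = 0 \<and> q = 0 then 1 else 0) :: 'a mat) $$ (a,b) = (if a = b then c else 0)"
      using key[of "0\<^sub>m d0 d0" "mat d1 d1 (\<lambda>(p,q). if p = 0 \<and> q = 0 then 1 else 0)"] by auto
    have c: "c = 1" using c1[rule_format, of 0 0] True' by simp
    have "d1 = 1"
    proof (rule ccontr)
      assume "d1 \<noteq> 1"
      then have "1 < d1" using True' by simp
      then show False using c1 c by fastforce
    qed
    then show ?thesis using True' by (simp add: d0_def d1_def)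
  qed
qed



definition isS1 :: "nat \<Rightarrow> 'k::field rep \<Rightarrow> bool" where
  "isS1 m X \<longleftrightarrow> is_rep (Qm m) X \<and> dimv X 0 = 1 \<and> dimv X 1 = 0 \<and> zmaps (Qm m) X"
definition isS2 :: "nat \<Rightarrow> 'k::field rep \<Rightarrow> bool" where
  "isS2 m X \<longleftrightarrow> is_rep (Qm m) X \<and> dimv X 0 = 0 \<and> dimv X 1 = 1 \<and> zmaps (Qm m) X"
definition isP :: "nat \<Rightarrow> 'k::field rep \<Rightarrow> 'k \<Rightarrow> bool" where
  "isP m X g \<longleftrightarrow> is_rep (Qm m) X \<and> dimv X 0 = 1 \<and> dimv X 1 = 1 \<and> g \<noteq> 0 \<and>
     (\<forall>a<m. maps X a = 0\<^sub>m 1 1) \<and> maps X m = mat 1 1 (\<lambda>_. g) \<and> maps X (Suc m) = 0\<^sub>m 1 1"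
definition isN :: "nat \<Rightarrow> 'k::field rep \<Rightarrow> 'k \<Rightarrow> bool" where
  "isN m X g \<longleftrightarrow> is_rep (Qm m) X \<and> dimv X 0 = 1 \<and> dimv X 1 = 1 \<and> g \<noteq> 0 \<and>
     (\<forall>a<m. maps X a = 0\<^sub>m 1 1) \<and> maps X m = 0\<^sub>m 1 1 \<and> maps X (Suc m) = mat 1 1 (\<lambda>_. g)"

lemma mat11: "A \<in> carrier_mat 1 1 \<Longrightarrow> A = mat 1 1 (\<lambda>_. A $$ (0,0))"
  by (rule eq_matI) auto

lemma mat_zero_eq: "A \<in> carrier_mat r c \<Longrightarrow> (\<forall>i<r. \<forall>j<c. A $$ (i,j) = 0) \<Longrightarrow> A = 0\<^sub>m r c"
  by (rule eq_matI) auto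

lemma classify:
  assumes b: "brick (Qm m) X"
  shows "isS1 m X \<or> isS2 m X \<or> (\<exists>g. isP m X g) \<or> (\<exists>g. isN m X g)"
proof -
  have rep: "is_rep (Qm m) X" using b by (simp add: brick_def)
  note R = rep_facts[OF rep]
  note L0 = loops_zero[OF b]
  show ?thesis
  proof (cases "\<exists>i<dimv X 1. \<exists>j<dimv X 0. maps X m $$ (i,j) \<noteq> 0")
    case True
    then obtain i j where ij: "i < dimv X 1" "j < dimv X 0" "maps X m $$ (i,j) \<noteq> 0" by blast
    from G_nonzero[OF b ij] have d: "dimv X 0 = 1" "dimv X 1 = 1" by auto
    define g where "g = maps X m $$ (0,0)"
    have g: "g \<noteq> 0" using ij d by (simp add: g_def)
    have G: "maps X m = mat 1 1 (\<lambda>_. g)" using mat11[of "maps X m"] R(2) d by (simp add: g_def)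
    have "(maps X (Suc m) * maps X m) $$ (0,0) = 0" using R(7) d by simp
    then have "maps X (Suc m) $$ (0,0) * g = 0" using R(3) d G by (simp add: scalar_prod_def)
    then have "maps X (Suc m) $$ (0,0) = 0" using g by simp
    then have D: "maps X (Suc m) = 0\<^sub>m 1 1" using R(3) d by (intro mat_zero_eq) auto
    have "isP m X g" unfolding isP_def using rep d g G D L0 by simp
    then show ?thesis by blast
  next
    case False
    then have G0: "maps X m = 0\<^sub>m (dimv X 1) (dimv X 0)" using R(2) by (intro mat_zero_eq) auto
    show ?thesis
    proof (cases "\<exists>i<dimv X 0. \<exists>j<dimv X 1. maps X (Suc m) $$ (i,j) \<noteq> 0")
      case True
      then obtain i j where ij: "i < dimv X 0" "j < dimv X 1" "maps X (Suc m) $$ (i,j) \<noteq> 0" by blast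
      from D_nonzero[OF b ij] have d: "dimv X 0 = 1" "dimv X 1 = 1" by auto
      define g where "g = maps X (Suc m) $$ (0,0)"
      have g: "g \<noteq> 0" using ij d by (simp add: g_def)
      have D: "maps X (Suc m) = mat 1 1 (\<lambda>_. g)" using mat11[of "maps X (Suc m)"] R(3) d by (simp add: g_def)
      have "isN m X g" unfolding isN_def using rep d g G0 D L0 by simp
      then show ?thesis by blast
    next
      case False
      then have D0: "maps X (Suc m) = 0\<^sub>m (dimv X 0) (dimv X 1)" using R(3) by (intro mat_zero_eq) auto
      have z: "zmaps (Qm m) X" unfolding zmaps_def
      proof (intro allI impI)
        fix a assume a: "a < narrs (Qm m)"
        show "maps X a = 0\<^sub>m (dimv X (tgt (Qm m) a)) (dimv X (src (Qm m) a))"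
          using arr_split[OF a] L0 G0 D0 by auto
      qed
      from zero_case[OF b G0 D0] show ?thesis using z rep by (auto simp: isS1_def isS2_def)
    qed
  qed
qed



lemma v_cases: "(v::nat) = 0 \<or> v = 1 \<or> v \<ge> 2" by arith

lemma rep_dims: "is_rep (Qm m) X \<Longrightarrow> dimv X v = (if v = 0 then dimv X 0 else if v = 1 then dimv X 1 else 0)"
  unfolding is_rep_def using v_cases[of v] by auto

lemma S1_dims: "isS1 m X \<Longrightarrow> dimv X = (\<lambda>v. if v = 0 then 1 else 0)"
  unfolding isS1_def by (intro ext, subst rep_dims, auto)
lemma S2_dims: "isS2 m X \<Longrightarrow> dimv X = (\<lambda>v. if v = 1 then 1 else 0)"
  unfolding isS2_def by (intro ext, subst rep_dims, auto)
lemma P_dims: "isP m X g \<Longrightarrow> dimv X = (\<lambda>v. if v < 2 then 1 else 0)"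
  unfolding isP_def by (intro ext, subst rep_dims, auto)
lemma N_dims: "isN m X g \<Longrightarrow> dimv X = (\<lambda>v. if v < 2 then 1 else 0)"
  unfolding isN_def by (intro ext, subst rep_dims, auto)

lemma S1_maps: "isS1 m X \<Longrightarrow> a < Suc (Suc m) \<Longrightarrow> maps X a = 0\<^sub>m (dimv X (tgt (Qm m) a)) (dimv X (src (Qm m) a))"
  unfolding isS1_def zmaps_def by auto
lemma S2_maps: "isS2 m X \<Longrightarrow> a < Suc (Suc m) \<Longrightarrow> maps X a = 0\<^sub>m (dimv X (tgt (Qm m) a)) (dimv X (src (Qm m) a))"
  unfolding isS2_def zmaps_def by auto
lemma P_maps: "isP m X g \<Longrightarrow> a < Suc (Suc m) \<Longrightarrow> maps X a = (if a = m then mat 1 1 (\<lambda>_. g) else 0\<^sub>m 1 1)"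
  unfolding isP_def by (auto simp: less_Suc_eq)
lemma N_maps: "isN m X g \<Longrightarrow> a < Suc (Suc m) \<Longrightarrow> maps X a = (if a = Suc m then mat 1 1 (\<lambda>_. g) else 0\<^sub>m 1 1)"
  unfolding isN_def by (auto simp: less_Suc_eq)



lemma dims_le1:
  "isS1 m X \<Longrightarrow> dimv X v \<le> 1" "isS2 m X \<Longrightarrow> dimv X v \<le> 1"
  "isP m X g \<Longrightarrow> dimv X v \<le> 1" "isN m X g \<Longrightarrow> dimv X v \<le> 1"
  by (auto simp: S1_dims S2_dims P_dims N_dims)

definition K0 :: "(nat \<times> nat \<times> nat) set" where "K0 = {0,1} \<times> {0} \<times> {0}"

lemma hom_nz:
  assumes f: "f \<in> homs (Qm m) X Y" and nz: "f v i j \<noteq> 0"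
    and dX: "\<And>v. dimv X v \<le> 1" and dY: "\<And>v. dimv Y v \<le> 1"
  shows "hom_dim (Qm m) X Y \<noteq> 0"
  unfolding hom_dim_def
proof (rule kdim_pos[of K0 _ f])
  show "finite K0" by (simp add: K0_def)
  show "homs (Qm m) X Y \<subseteq> supp3 K0"
  proof
    fix h assume h: "h \<in> homs (Qm m) X Y"
    show "h \<in> supp3 K0" unfolding supp3_def
    proof (intro CollectI allI impI)
      fix v i j assume "(v, i, j) \<notin> K0"
      then have "\<not> (v < nverts (Qm m) \<and> i < dimv Y v \<and> j < dimv X v)"
        using dX[of v] dY[of v] by (auto simp: K0_def)
      then show "h v i j = 0" using h unfolding homs_def by blast
    qed
  qed
  show "f \<in> homs (Qm m) X Y" by (rule f)
  show "f \<noteq> 0" using nz by auto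
qed

lemma hom_S1_S1:
  assumes X: "isS1 m X" and Y: "isS1 m Y"
  shows "ind3 (0,0,0) \<in> homs (Qm m) X Y"
  unfolding homs_def
proof (intro CollectI conjI allI impI)
  fix v i j show "\<not> (v < nverts (Qm m) \<and> i < dimv Y v \<and> j < dimv X v) \<Longrightarrow> ind3 (0,0,0) v i j = 0"
    using S1_dims[OF X] S1_dims[OF Y] by (auto simp: ind3_def)
next
  fix a assume a: "a < narrs (Qm m)"
  show "maps Y a * tomat (dimv Y (src (Qm m) a)) (dimv X (src (Qm m) a)) (ind3 (0,0,0) (src (Qm m) a)) =
        tomat (dimv Y (tgt (Qm m) a)) (dimv X (tgt (Qm m) a)) (ind3 (0,0,0) (tgt (Qm m) a)) * maps X a"
    using arr_split[OF a] a S1_maps[OF X, of a] S1_maps[OF Y, of a]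
    by (auto simp: S1_dims[OF X] S1_dims[OF Y] intro!: eq_matI simp: scalar_prod_def ind3_def)
qed

lemma hom_S2_S2:
  assumes X: "isS2 m X" and Y: "isS2 m Y"
  shows "ind3 (1,0,0) \<in> homs (Qm m) X Y"
  unfolding homs_def
proof (intro CollectI conjI allI impI)
  fix v i j show "\<not> (v < nverts (Qm m) \<and> i < dimv Y v \<and> j < dimv X v) \<Longrightarrow> ind3 (1,0,0) v i j = 0"
    using S2_dims[OF X] S2_dims[OF Y] by (auto simp: ind3_def)
next
  fix a assume a: "a < narrs (Qm m)"
  show "maps Y a * tomat (dimv Y (src (Qm m) a)) (dimv X (src (Qm m) a)) (ind3 (1,0,0) (src (Qm m) a)) =
        tomat (dimv Y (tgt (Qm m) a)) (dimv X (tgt (Qm m) a)) (ind3 (1,0,0) (tgt (Qm m) a)) * maps X a"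
    using arr_split[OF a] a S2_maps[OF X, of a] S2_maps[OF Y, of a]
    by (auto simp: S2_dims[OF X] S2_dims[OF Y] intro!: eq_matI simp: scalar_prod_def ind3_def)
qed

lemma hom_P_P:
  assumes X: "isP m X g" and Y: "isP m Y g'"
  shows "(\<lambda>v i j. if v = 0 \<and> i = 0 \<and> j = 0 then g else if v = 1 \<and> i = 0 \<and> j = 0 then g' else 0) \<in> homs (Qm m) X Y"
  unfolding homs_def
proof (intro CollectI conjI allI impI)
  fix v i j show "\<not> (v < nverts (Qm m) \<and> i < dimv Y v \<and> j < dimv X v) \<Longrightarrow> (\<lambda>v i j. if v = 0 \<and> i = 0 \<and> j = 0 then g else if v = 1 \<and> i = 0 \<and> j = 0 then g' else 0) v i j = 0"
    using P_dims[OF X] P_dims[OF Y] by (auto simp: ind3_def)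
next
  fix a assume a: "a < narrs (Qm m)"
  show "maps Y a * tomat (dimv Y (src (Qm m) a)) (dimv X (src (Qm m) a)) ((\<lambda>v i j. if v = 0 \<and> i = 0 \<and> j = 0 then g else if v = 1 \<and> i = 0 \<and> j = 0 then g' else 0) (src (Qm m) a)) =
        tomat (dimv Y (tgt (Qm m) a)) (dimv X (tgt (Qm m) a)) ((\<lambda>v i j. if v = 0 \<and> i = 0 \<and> j = 0 then g else if v = 1 \<and> i = 0 \<and> j = 0 then g' else 0) (tgt (Qm m) a)) * maps X a"
    using arr_split[OF a] a P_maps[OF X, of a] P_maps[OF Y, of a]
    by (auto simp: P_dims[OF X] P_dims[OF Y] intro!: eq_matI simp: scalar_prod_def ind3_def)
qed

lemma hom_N_N:
  assumes X: "isN m X g" and Y: "isN m Y g'"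
  shows "(\<lambda>v i j. if v = 0 \<and> i = 0 \<and> j = 0 then g' else if v = 1 \<and> i = 0 \<and> j = 0 then g else 0) \<in> homs (Qm m) X Y"
  unfolding homs_def
proof (intro CollectI conjI allI impI)
  fix v i j show "\<not> (v < nverts (Qm m) \<and> i < dimv Y v \<and> j < dimv X v) \<Longrightarrow> (\<lambda>v i j. if v = 0 \<and> i = 0 \<and> j = 0 then g' else if v = 1 \<and> i = 0 \<and> j = 0 then g else 0) v i j = 0"
    using N_dims[OF X] N_dims[OF Y] by (auto simp: ind3_def)
next
  fix a assume a: "a < narrs (Qm m)"
  show "maps Y a * tomat (dimv Y (src (Qm m) a)) (dimv X (src (Qm m) a)) ((\<lambda>v i j. if v = 0 \<and> i = 0 \<and> j = 0 then g' else if v = 1 \<and> i = 0 \<and> j = 0 then g else 0) (src (Qm m) a)) =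
        tomat (dimv Y (tgt (Qm m) a)) (dimv X (tgt (Qm m) a)) ((\<lambda>v i j. if v = 0 \<and> i = 0 \<and> j = 0 then g' else if v = 1 \<and> i = 0 \<and> j = 0 then g else 0) (tgt (Qm m) a)) * maps X a"
    using arr_split[OF a] a N_maps[OF X, of a] N_maps[OF Y, of a]
    by (auto simp: N_dims[OF X] N_dims[OF Y] intro!: eq_matI simp: scalar_prod_def ind3_def)
qed

lemma hom_P_S1:
  assumes X: "isP m X g" and Y: "isS1 m Y"
  shows "ind3 (0,0,0) \<in> homs (Qm m) X Y"
  unfolding homs_def
proof (intro CollectI conjI allI impI)
  fix v i j show "\<not> (v < nverts (Qm m) \<and> i < dimv Y v \<and> j < dimv X v) \<Longrightarrow> ind3 (0,0,0) v i j = 0"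
    using P_dims[OF X] S1_dims[OF Y] by (auto simp: ind3_def)
next
  fix a assume a: "a < narrs (Qm m)"
  show "maps Y a * tomat (dimv Y (src (Qm m) a)) (dimv X (src (Qm m) a)) (ind3 (0,0,0) (src (Qm m) a)) =
        tomat (dimv Y (tgt (Qm m) a)) (dimv X (tgt (Qm m) a)) (ind3 (0,0,0) (tgt (Qm m) a)) * maps X a"
    using arr_split[OF a] a P_maps[OF X, of a] S1_maps[OF Y, of a]
    by (auto simp: P_dims[OF X] S1_dims[OF Y] intro!: eq_matI simp: scalar_prod_def ind3_def)
qed

lemma hom_S2_P:
  assumes X: "isS2 m X" and Y: "isP m Y g"
  shows "ind3 (1,0,0) \<in> homs (Qm m) X Y"
  unfolding homs_def
proof (intro CollectI conjI allI impI)
  fix v i j show "\<not> (v < nverts (Qm m) \<and> i < dimv Y v \<and> j < dimv X v) \<Longrightarrow> ind3 (1,0,0) v i j = 0"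
    using S2_dims[OF X] P_dims[OF Y] by (auto simp: ind3_def)
next
  fix a assume a: "a < narrs (Qm m)"
  show "maps Y a * tomat (dimv Y (src (Qm m) a)) (dimv X (src (Qm m) a)) (ind3 (1,0,0) (src (Qm m) a)) =
        tomat (dimv Y (tgt (Qm m) a)) (dimv X (tgt (Qm m) a)) (ind3 (1,0,0) (tgt (Qm m) a)) * maps X a"
    using arr_split[OF a] a S2_maps[OF X, of a] P_maps[OF Y, of a]
    by (auto simp: S2_dims[OF X] P_dims[OF Y] intro!: eq_matI simp: scalar_prod_def ind3_def)
qed

lemma hom_S1_N:
  assumes X: "isS1 m X" and Y: "isN m Y g"
  shows "ind3 (0,0,0) \<in> homs (Qm m) X Y"
  unfolding homs_def
proof (intro CollectI conjI allI impI)
  fix v i j show "\<not> (v < nverts (Qm m) \<and> i < dimv Y v \<and> j < dimv X v) \<Longrightarrow> ind3 (0,0,0) v i j = 0"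
    using S1_dims[OF X] N_dims[OF Y] by (auto simp: ind3_def)
next
  fix a assume a: "a < narrs (Qm m)"
  show "maps Y a * tomat (dimv Y (src (Qm m) a)) (dimv X (src (Qm m) a)) (ind3 (0,0,0) (src (Qm m) a)) =
        tomat (dimv Y (tgt (Qm m) a)) (dimv X (tgt (Qm m) a)) (ind3 (0,0,0) (tgt (Qm m) a)) * maps X a"
    using arr_split[OF a] a S1_maps[OF X, of a] N_maps[OF Y, of a]
    by (auto simp: S1_dims[OF X] N_dims[OF Y] intro!: eq_matI simp: scalar_prod_def ind3_def)
qed

lemma hom_N_S2:
  assumes X: "isN m X g" and Y: "isS2 m Y"
  shows "ind3 (1,0,0) \<in> homs (Qm m) X Y"
  unfolding homs_def
proof (intro CollectI conjI allI impI)
  fix v i j show "\<not> (v < nverts (Qm m) \<and> i < dimv Y v \<and> j < dimv X v) \<Longrightarrow> ind3 (1,0,0) v i j = 0"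
    using N_dims[OF X] S2_dims[OF Y] by (auto simp: ind3_def)
next
  fix a assume a: "a < narrs (Qm m)"
  show "maps Y a * tomat (dimv Y (src (Qm m) a)) (dimv X (src (Qm m) a)) (ind3 (1,0,0) (src (Qm m) a)) =
        tomat (dimv Y (tgt (Qm m) a)) (dimv X (tgt (Qm m) a)) (ind3 (1,0,0) (tgt (Qm m) a)) * maps X a"
    using arr_split[OF a] a N_maps[OF X, of a] S2_maps[OF Y, of a]
    by (auto simp: N_dims[OF X] S2_dims[OF Y] intro!: eq_matI simp: scalar_prod_def ind3_def)
qed

lemma hom_P_N:
  assumes X: "isP m X g" and Y: "isN m Y g'"
  shows "ind3 (0,0,0) \<in> homs (Qm m) X Y"
  unfolding homs_def
proof (intro CollectI conjI allI impI)
  fix v i j show "\<not> (v < nverts (Qm m) \<and> i < dimv Y v \<and> j < dimv X v) \<Longrightarrow> ind3 (0,0,0) v i j = 0"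
    using P_dims[OF X] N_dims[OF Y] by (auto simp: ind3_def)
next
  fix a assume a: "a < narrs (Qm m)"
  show "maps Y a * tomat (dimv Y (src (Qm m) a)) (dimv X (src (Qm m) a)) (ind3 (0,0,0) (src (Qm m) a)) =
        tomat (dimv Y (tgt (Qm m) a)) (dimv X (tgt (Qm m) a)) (ind3 (0,0,0) (tgt (Qm m) a)) * maps X a"
    using arr_split[OF a] a P_maps[OF X, of a] N_maps[OF Y, of a]
    by (auto simp: P_dims[OF X] N_dims[OF Y] intro!: eq_matI simp: scalar_prod_def ind3_def)
qed

lemma hz_S1_S1:
  assumes X: "isS1 m X" and Y: "isS1 m Y"
  shows "hom_dim (Qm m) X Y \<noteq> 0"
  using hom_nz[OF hom_S1_S1[OF X Y], of 0 0 0, OF _ dims_le1(1)[OF X] dims_le1(1)[OF Y]] X Y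
  by (auto simp: ind3_def)

lemma hz_S2_S2:
  assumes X: "isS2 m X" and Y: "isS2 m Y"
  shows "hom_dim (Qm m) X Y \<noteq> 0"
  using hom_nz[OF hom_S2_S2[OF X Y], of 1 0 0, OF _ dims_le1(2)[OF X] dims_le1(2)[OF Y]] X Y
  by (auto simp: ind3_def)

lemma hz_P_P:
  assumes X: "isP m X g" and Y: "isP m Y g'"
  shows "hom_dim (Qm m) X Y \<noteq> 0"
  using hom_nz[OF hom_P_P[OF X Y], of 0 0 0, OF _ dims_le1(3)[OF X] dims_le1(3)[OF Y]] X Y
  by (auto simp: isP_def)

lemma hz_N_N:
  assumes X: "isN m X g" and Y: "isN m Y g'"
  shows "hom_dim (Qm m) X Y \<noteq> 0"
  using hom_nz[OF hom_N_N[OF X Y], of 1 0 0, OF _ dims_le1(4)[OF X] dims_le1(4)[OF Y]] X Y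
  by (auto simp: isN_def)

lemma hz_P_S1:
  assumes X: "isP m X g" and Y: "isS1 m Y"
  shows "hom_dim (Qm m) X Y \<noteq> 0"
  using hom_nz[OF hom_P_S1[OF X Y], of 0 0 0, OF _ dims_le1(3)[OF X] dims_le1(1)[OF Y]] X Y
  by (auto simp: ind3_def)

lemma hz_S2_P:
  assumes X: "isS2 m X" and Y: "isP m Y g"
  shows "hom_dim (Qm m) X Y \<noteq> 0"
  using hom_nz[OF hom_S2_P[OF X Y], of 1 0 0, OF _ dims_le1(2)[OF X] dims_le1(3)[OF Y]] X Y
  by (auto simp: ind3_def)

lemma hz_S1_N:
  assumes X: "isS1 m X" and Y: "isN m Y g"
  shows "hom_dim (Qm m) X Y \<noteq> 0"
  using hom_nz[OF hom_S1_N[OF X Y], of 0 0 0, OF _ dims_le1(1)[OF X] dims_le1(4)[OF Y]] X Y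
  by (auto simp: ind3_def)

lemma hz_N_S2:
  assumes X: "isN m X g" and Y: "isS2 m Y"
  shows "hom_dim (Qm m) X Y \<noteq> 0"
  using hom_nz[OF hom_N_S2[OF X Y], of 1 0 0, OF _ dims_le1(4)[OF X] dims_le1(2)[OF Y]] X Y
  by (auto simp: ind3_def)

lemma hz_P_N:
  assumes X: "isP m X g" and Y: "isN m Y g'"
  shows "hom_dim (Qm m) X Y \<noteq> 0"
  using hom_nz[OF hom_P_N[OF X Y], of 0 0 0, OF _ dims_le1(3)[OF X] dims_le1(4)[OF Y]] X Y
  by (auto simp: ind3_def)

lemma compat:
  assumes bX: "brick (Qm m) X" and bY: "brick (Qm m) Y"
    and h1: "hom_dim (Qm m) X Y = 0" and h2: "hom_dim (Qm m) Y X = 0"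
  shows "(isS1 m X \<and> isS2 m Y) \<or> (isS2 m X \<and> isS1 m Y)"
  using classify[OF bX] classify[OF bY] h1 h2
    hz_S1_S1[of m X Y] hz_S1_S1[of m Y X] hz_S2_S2[of m X Y]
    hz_P_P[of m X _ Y] hz_N_N[of m X _ Y]
    hz_P_S1[of m X _ Y] hz_P_S1[of m Y _ X]
    hz_S2_P[of m X Y] hz_S2_P[of m Y X]
    hz_S1_N[of m X Y] hz_S1_N[of m Y X]
    hz_N_S2[of m X _ Y] hz_N_S2[of m Y _ X]
    hz_P_N[of m X _ Y] hz_P_N[of m Y _ X]
  by blast



lemma supp_eq:
  assumes "\<And>a i j. P a i j \<longleftrightarrow> (a,i,j) \<in> K"
  shows "{d. \<forall>a i j. \<not> P a i j \<longrightarrow> d a i j = 0} = (supp3 K :: (nat \<Rightarrow> nat \<Rightarrow> nat \<Rightarrow> 'k::field) set)"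
  using assms unfolding supp3_def by auto

lemma ext_S:
  assumes X: "zmaps Q X" and Y: "zmaps Q Y" and fin: "finite K"
    and K: "\<And>a i j. (a < narrs Q \<and> i < dimv Y (tgt Q a) \<and> j < dimv X (src Q a)) \<longleftrightarrow> (a,i,j) \<in> K"
  shows "ext1_dim Q X Y = card K"
proof -
  have "kdim (cocycles Q X Y) = card K"
    by (rule kdim_eq[OF fin], unfold cocycles_zero[OF X Y], rule supp_eq[OF K])
  moreover have "kdim (coboundaries Q X Y) = 0" by (rule kdim_zero[OF coboundaries_zero[OF X Y]])
  ultimately show ?thesis by (simp add: ext1_dim_def)
qed

lemma S1_z: "isS1 m X \<Longrightarrow> zmaps (Qm m) X" by (simp add: isS1_def)
lemma S2_z: "isS2 m X \<Longrightarrow> zmaps (Qm m) X" by (simp add: isS2_def)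

lemma ext_S1_S1: "isS1 m X \<Longrightarrow> isS1 m Y \<Longrightarrow> ext1_dim (Qm m) X Y = m"
proof -
  assume X: "isS1 m X" and Y: "isS1 m Y"
  have "ext1_dim (Qm m) X Y = card ({..<m} \<times> {0::nat} \<times> {0::nat})"
  proof (rule ext_S[OF S1_z[OF X] S1_z[OF Y]])
    fix a i j
    show "(a < narrs (Qm m) \<and> i < dimv Y (tgt (Qm m) a) \<and> j < dimv X (src (Qm m) a)) \<longleftrightarrow> (a,i,j) \<in> {..<m} \<times> {0} \<times> {0}"
    proof (cases "a < narrs (Qm m)")
      case True then show ?thesis using arr_split[OF True] by (auto simp: S1_dims[OF X] S1_dims[OF Y])
    qed auto
  qed simp
  then show ?thesis by (simp add: card_cartesian_product)
qed

lemma ext_S1_S2: "isS1 m X \<Longrightarrow> isS2 m Y \<Longrightarrow> ext1_dim (Qm m) X Y = 1"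
proof -
  assume X: "isS1 m X" and Y: "isS2 m Y"
  have "ext1_dim (Qm m) X Y = card {(m, 0::nat, 0::nat)}"
  proof (rule ext_S[OF S1_z[OF X] S2_z[OF Y]])
    fix a i j
    show "(a < narrs (Qm m) \<and> i < dimv Y (tgt (Qm m) a) \<and> j < dimv X (src (Qm m) a)) \<longleftrightarrow> (a,i,j) \<in> {(m,0,0)}"
    proof (cases "a < narrs (Qm m)")
      case True then show ?thesis using arr_split[OF True] by (auto simp: S1_dims[OF X] S2_dims[OF Y])
    qed auto
  qed simp
  then show ?thesis by simp
qed

lemma ext_S2_S1: "isS2 m X \<Longrightarrow> isS1 m Y \<Longrightarrow> ext1_dim (Qm m) X Y = 1"
proof -
  assume X: "isS2 m X" and Y: "isS1 m Y"
  have "ext1_dim (Qm m) X Y = card {(Suc m, 0::nat, 0::nat)}"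
  proof (rule ext_S[OF S2_z[OF X] S1_z[OF Y]])
    fix a i j
    show "(a < narrs (Qm m) \<and> i < dimv Y (tgt (Qm m) a) \<and> j < dimv X (src (Qm m) a)) \<longleftrightarrow> (a,i,j) \<in> {(Suc m,0,0)}"
    proof (cases "a < narrs (Qm m)")
      case True then show ?thesis using arr_split[OF True] by (auto simp: S2_dims[OF X] S1_dims[OF Y])
    qed auto
  qed simp
  then show ?thesis by simp
qed

lemma ext_S2_S2: "isS2 m X \<Longrightarrow> isS2 m Y \<Longrightarrow> ext1_dim (Qm m) X Y = 0"
proof -
  assume X: "isS2 m X" and Y: "isS2 m Y"
  have "ext1_dim (Qm m) X Y = card ({} :: (nat \<times> nat \<times> nat) set)"
  proof (rule ext_S[OF S2_z[OF X] S2_z[OF Y]])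
    fix a i j
    show "(a < narrs (Qm m) \<and> i < dimv Y (tgt (Qm m) a) \<and> j < dimv X (src (Qm m) a)) \<longleftrightarrow> (a,i,j) \<in> {}"
    proof (cases "a < narrs (Qm m)")
      case True then show ?thesis using arr_split[OF True] by (auto simp: S2_dims[OF X] S2_dims[OF Y])
    qed auto
  qed simp
  then show ?thesis by simp
qed

lemma cocycle_cond:
  assumes "d \<in> cocycles Q X Y" "a < narrs Q" "b < narrs Q" "tgt Q a = src Q b"
  shows "maps Y b * tomat (dimv Y (tgt Q a)) (dimv X (src Q a)) (d a) +
        tomat (dimv Y (tgt Q b)) (dimv X (src Q b)) (d b) * maps X a
        = 0\<^sub>m (dimv Y (tgt Q b)) (dimv X (src Q a))"
  using assms unfolding cocycles_def by blast

lemma cocycle_supp: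
  assumes "d \<in> cocycles Q X Y" "\<not> (a < narrs Q \<and> i < dimv Y (tgt Q a) \<and> j < dimv X (src Q a))"
  shows "d a i j = 0"
  using assms unfolding cocycles_def by blast

lemma ext_le_cocycles: "ext1_dim Q X Y \<le> kdim (cocycles Q X Y)"
  by (simp add: ext1_dim_def)

lemma ext_P: assumes X: "isP m X g" shows "ext1_dim (Qm m) X X \<le> 1"
proof -
  have g: "g \<noteq> 0" using X by (simp add: isP_def)
  have "cocycles (Qm m) X X \<subseteq> supp3 {(m,0,0)}"
  proof
    fix d assume d: "d \<in> cocycles (Qm m) X X"
    show "d \<in> supp3 {(m,0,0)}" unfolding supp3_def
    proof (intro CollectI allI impI)
      fix a i j :: nat assume aij: "(a,i,j) \<notin> {(m,0,0)}"
      show "d a i j = 0"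
      proof (cases "a < narrs (Qm m) \<and> i = 0 \<and> j = 0")
        case False
        then show ?thesis using cocycle_supp[OF d, of a i j] by (auto simp: P_dims[OF X])
      next
        case True
        then have ij: "i = 0" "j = 0" and a: "a < narrs (Qm m)" by auto
        show ?thesis
        proof (cases "a < m")
          case True
          have "(maps X m * tomat 1 1 (d a) + tomat 1 1 (d m) * maps X a) $$ (0,0) = 0"
            using cocycle_cond[OF d a, of m] True by (simp add: P_dims[OF X])
          then have "g * d a 0 0 = 0" using True P_maps[OF X, of m] P_maps[OF X, of a]
            by (simp add: scalar_prod_def)
          then show ?thesis using g ij by simp
        next
          case False
          then have "a = Suc m" using arr_split[OF a] aij ij by auto
          have "(maps X (Suc m) * tomat 1 1 (d m) + tomat 1 1 (d (Suc m)) * maps X m) $$ (0,0) = 0"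
            using cocycle_cond[OF d, of m "Suc m"] by (simp add: P_dims[OF X])
          then have "d (Suc m) 0 0 * g = 0" using P_maps[OF X, of m] P_maps[OF X, of "Suc m"]
            by (simp add: scalar_prod_def)
          then show ?thesis using g ij \<open>a = Suc m\<close> by simp
        qed
      qed
    qed
  qed
  from kdim_le[OF _ this] ext_le_cocycles[of "Qm m" X X] show ?thesis by simp
qed

lemma ext_N: assumes X: "isN m X g" shows "ext1_dim (Qm m) X X \<le> 1"
proof -
  have g: "g \<noteq> 0" using X by (simp add: isN_def)
  have "cocycles (Qm m) X X \<subseteq> supp3 {(Suc m,0,0)}"
  proof
    fix d assume d: "d \<in> cocycles (Qm m) X X"
    show "d \<in> supp3 {(Suc m,0,0)}" unfolding supp3_def
    proof (intro CollectI allI impI)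
      fix a i j :: nat assume aij: "(a,i,j) \<notin> {(Suc m,0,0)}"
      show "d a i j = 0"
      proof (cases "a < narrs (Qm m) \<and> i = 0 \<and> j = 0")
        case False
        then show ?thesis using cocycle_supp[OF d, of a i j] by (auto simp: N_dims[OF X])
      next
        case True
        then have ij: "i = 0" "j = 0" and a: "a < narrs (Qm m)" by auto
        show ?thesis
        proof (cases "a < m")
          case True
          have "(maps X a * tomat 1 1 (d (Suc m)) + tomat 1 1 (d a) * maps X (Suc m)) $$ (0,0) = 0"
            using cocycle_cond[OF d, of "Suc m" a] True by (simp add: N_dims[OF X])
          then have "d a 0 0 * g = 0" using True N_maps[OF X, of "Suc m"] N_maps[OF X, of a]
            by (simp add: scalar_prod_def)
          then show ?thesis using g ij by simp
        next
          case False
          then have "a = m" using arr_split[OF a] aij ij by auto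
          have "(maps X m * tomat 1 1 (d (Suc m)) + tomat 1 1 (d m) * maps X (Suc m)) $$ (0,0) = 0"
            using cocycle_cond[OF d, of "Suc m" m] by (simp add: N_dims[OF X])
          then have "d m 0 0 * g = 0" using N_maps[OF X, of m] N_maps[OF X, of "Suc m"]
            by (simp add: scalar_prod_def)
          then show ?thesis using g ij \<open>a = m\<close> by simp
        qed
      qed
    qed
  qed
  from kdim_le[OF _ this] ext_le_cocycles[of "Qm m" X X] show ?thesis by simp
qed



lemma sqrt_rat_square:
  assumes "sqrt (real N) \<in> \<rat>"
  shows "\<exists>k. N = k^2"
proof -
  from assms obtain p q :: nat where q: "q \<noteq> 0" and e: "\<bar>sqrt (real N)\<bar> = real p / real q"
    and cp: "coprime p q" by (rule Rats_abs_nat_div_natE)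
  have "real p = sqrt (real N) * real q" using e q by (simp add: field_simps)
  then have "real p ^ 2 = real N * real q ^ 2" by (simp add: power_mult_distrib)
  then have "real (p^2) = real (N * q^2)" by simp
  then have eq: "p^2 = N * q^2" by (simp only: of_nat_eq_iff)
  then have "q^2 dvd p^2" by simp
  have "q dvd p" using \<open>q^2 dvd p^2\<close> by simp
  then have "q dvd gcd p q" by simp
  then have "q dvd 1" using cp by simp
  then have "q = 1" by simp
  then show ?thesis using eq by auto
qed

lemma not_square: "(m::nat) \<ge> 1 \<Longrightarrow> m^2 + 4 \<noteq> k^2"
proof
  assume m: "m \<ge> 1" and e: "m^2 + 4 = k^2"
  have "m^2 < k^2" using e by simp
  then have "m < k" using power_less_imp_less_base[of m 2 k] by simp
  show False
  proof (cases "k = m + 1")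
    case True
    then have "m * m + 4 = m * m + 2 * m + 1" using e by (simp add: power2_eq_square algebra_simps)
    then show False by presburger
  next
    case False
    then have k: "k \<ge> m + 2" using \<open>m < k\<close> by simp
    have "(m + 2) * (m + 2) \<le> k * k" using mult_le_mono[OF k k] .
    also have "k * k = m * m + 4" using e by (simp add: power2_eq_square)
    finally have "m * m + 4 * m + 4 \<le> m * m + 4" by (simp add: algebra_simps)
    then show False using m by simp
  qed
qed

lemma spec_1x1: "spectrum (mat 1 1 (\<lambda>_. c) :: complex mat) = {c}"
proof (intro Set.set_eqI iffI)
  fix k assume "k \<in> spectrum (mat 1 1 (\<lambda>_. c) :: complex mat)"
  then obtain v where v: "v \<in> carrier_vec 1" "v \<noteq> 0\<^sub>v 1" "mat 1 1 (\<lambda>_. c) *\<^sub>v v = k \<cdot>\<^sub>v v"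
    unfolding spectrum_def eigenvalue_def eigenvector_def by auto
  have "v $ 0 \<noteq> 0"
  proof
    assume "v $ 0 = 0"
    then have "v = 0\<^sub>v 1" using v(1) by (intro eq_vecI) auto
    then show False using v(2) by simp
  qed
  moreover have "(mat 1 1 (\<lambda>_. c) *\<^sub>v v) $ 0 = (k \<cdot>\<^sub>v v) $ 0" using v(3) by simp
  then have "c * v $ 0 = k * v $ 0" using v(1) by (simp add: scalar_prod_def)
  ultimately show "k \<in> {c}" by simp
next
  fix k assume "k \<in> {c}"
  then have k: "k = c" by simp
  have "eigenvector (mat 1 1 (\<lambda>_. c)) (vec 1 (\<lambda>_. 1)) k"
    unfolding eigenvector_def k
    by (auto intro!: eq_vecI simp: scalar_prod_def) (metis One_nat_def index_vec index_zero_vec(1) lessI one_neq_zero)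
  then show "k \<in> spectrum (mat 1 1 (\<lambda>_. c))" unfolding spectrum_def eigenvalue_def by auto
qed

lemma sr_1x1: "spectral_radius (mat 1 1 (\<lambda>_. c) :: complex mat) = cmod c"
  unfolding spectral_radius_def spec_1x1 by simp

definition M2 :: "complex \<Rightarrow> complex \<Rightarrow> complex mat" where
  "M2 p q = mat 2 2 (\<lambda>(i,j). if i = 0 \<and> j = 0 then p else if i = 1 \<and> j = 1 then q else 1)"

lemma M2_eig: "k \<in> spectrum (M2 p q) \<longleftrightarrow> (k - p) * (k - q) = 1"
proof
  assume "k \<in> spectrum (M2 p q)"
  then obtain v where v: "v \<in> carrier_vec 2" "v \<noteq> 0\<^sub>v 2" "M2 p q *\<^sub>v v = k \<cdot>\<^sub>v v"
    unfolding spectrum_def eigenvalue_def eigenvector_def by (auto simp: M2_def)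
  have nz: "v $ 0 \<noteq> 0 \<or> v $ 1 \<noteq> 0"
  proof (rule ccontr)
    assume "\<not> (v $ 0 \<noteq> 0 \<or> v $ 1 \<noteq> 0)"
    then have "v = 0\<^sub>v 2" using v(1) by (intro eq_vecI) (auto simp: less_2_cases_iff)
    then show False using v(2) by simp
  qed
  have "(M2 p q *\<^sub>v v) $ 0 = (k \<cdot>\<^sub>v v) $ 0" "(M2 p q *\<^sub>v v) $ 1 = (k \<cdot>\<^sub>v v) $ 1" using v(3) by simp_all
  then have e0: "p * v $ 0 + v $ 1 = k * v $ 0" and e1: "v $ 0 + q * v $ 1 = k * v $ 1"
    using v(1) by (simp_all add: M2_def scalar_prod_def numeral_2_eq_2)
  have a: "v $ 1 = (k - p) * v $ 0" using e0 by (simp add: algebra_simps)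
  have b: "v $ 0 = (k - q) * v $ 1" using e1 by (simp add: algebra_simps)
  have c0: "v $ 0 = (k - q) * ((k - p) * v $ 0)" using b unfolding a .
  have c1: "v $ 1 = (k - p) * ((k - q) * v $ 1)" using a unfolding b .
  have d0: "v $ 0 = ((k - p) * (k - q)) * v $ 0" using c0 by (simp add: ac_simps)
  have d1: "v $ 1 = ((k - p) * (k - q)) * v $ 1" using c1 by (simp add: ac_simps)
  show "(k - p) * (k - q) = 1"
    using nz mult_cancel_right1[of "v $ 0" "(k - p) * (k - q)"] mult_cancel_right1[of "v $ 1" "(k - p) * (k - q)"] d0 d1
    by blast
next
  assume k: "(k - p) * (k - q) = 1"
  define v :: "complex vec" where "v = vec 2 (\<lambda>i. if i = 0 then 1 else k - p)"
  have "eigenvector (M2 p q) v k"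
    unfolding eigenvector_def
  proof (intro conjI)
    show "v \<in> carrier_vec (dim_row (M2 p q))" by (simp add: v_def M2_def)
    have "v $ 0 = 1" by (simp add: v_def)
    then show "v \<noteq> 0\<^sub>v (dim_row (M2 p q))" by (auto simp: M2_def)
    show "M2 p q *\<^sub>v v = k \<cdot>\<^sub>v v"
    proof (rule eq_vecI)
      fix i assume "i < dim_vec (k \<cdot>\<^sub>v v)"
      then have "i = 0 \<or> i = 1" by (auto simp: v_def)
      then show "(M2 p q *\<^sub>v v) $ i = (k \<cdot>\<^sub>v v) $ i"
      proof
        assume "i = 0" then show ?thesis
          by (simp add: M2_def v_def scalar_prod_def numeral_2_eq_2)
      next
        assume "i = 1"
        have "1 + q * (k - p) = k * (k - p)" using k by (simp add: algebra_simps)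
        then show ?thesis using \<open>i = 1\<close>
          by (simp add: M2_def v_def scalar_prod_def numeral_2_eq_2)
      qed
    qed (simp add: M2_def v_def)
  qed
  then show "k \<in> spectrum (M2 p q)" unfolding spectrum_def eigenvalue_def by auto
qed

definition lp :: "nat \<Rightarrow> real" where "lp m = (real m + sqrt (real m ^ 2 + 4)) / 2"
definition lm :: "nat \<Rightarrow> real" where "lm m = (real m - sqrt (real m ^ 2 + 4)) / 2"

lemma quad_expand: "(k - a) * (k - b) = k * k - (a + b) * k + a * (b::complex)"
  by (simp add: algebra_simps)

lemma lp_lm: "lp m + lm m = real m" "lp m * lm m = -1"
proof -
  show "lp m + lm m = real m" by (simp add: lp_def lm_def field_simps)
  have "sqrt (real m ^ 2 + 4) ^ 2 = real m ^ 2 + 4" by simp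
  then show "lp m * lm m = -1" unfolding lp_def lm_def by (simp add: field_simps power2_eq_square)
qed

lemma lp_ge: "lp m \<ge> real m" "lp m \<ge> \<bar>lm m\<bar>" "lp m > 0"
proof -
  have s: "sqrt (real m ^ 2 + 4) \<ge> real m"
    by (rule real_le_rsqrt) simp
  have "real m ^ 2 + 4 > 0" by (simp add: add_nonneg_pos)
  then have s2: "sqrt (real m ^ 2 + 4) > 0" by simp
  show "lp m \<ge> real m" using s unfolding lp_def by simp
  show "lp m \<ge> \<bar>lm m\<bar>" using s unfolding lp_def lm_def by simp
  have "real m \<ge> 0" by simp
  then show "lp m > 0" using s2 unfolding lp_def by (intro divide_pos_pos add_nonneg_pos) auto
qed

lemma spec_M2:
  assumes pq: "p * q = 0" "p + q = of_nat m"
  shows "spectrum (M2 p q) = {complex_of_real (lp m), complex_of_real (lm m)}"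
proof (intro Set.set_eqI)
  fix k
  have e1: "(k - p) * (k - q) = k * k - of_nat m * k" using pq quad_expand[of k p q] by simp
  have "complex_of_real (lp m) + complex_of_real (lm m) = of_nat m"
    using lp_lm(1)[of m] by (metis of_real_add of_real_of_nat_eq)
  moreover have "complex_of_real (lp m) * complex_of_real (lm m) = -1"
    using lp_lm(2)[of m] by (metis of_real_minus of_real_mult of_real_1)
  ultimately have e2: "(k - complex_of_real (lp m)) * (k - complex_of_real (lm m)) = k * k - of_nat m * k - 1"
    using quad_expand[of k "complex_of_real (lp m)" "complex_of_real (lm m)"] by simp
  show "k \<in> spectrum (M2 p q) \<longleftrightarrow> k \<in> {complex_of_real (lp m), complex_of_real (lm m)}"
    unfolding M2_eig e1 using e2 by auto
qed

lemma sr_M2: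
  assumes pq: "p * q = 0" "p + q = of_nat m"
  shows "spectral_radius (M2 p q) = lp m"
proof -
  have "spectral_radius (M2 p q) = Max {\<bar>lp m\<bar>, \<bar>lm m\<bar>}"
    unfolding spectral_radius_def spec_M2[OF pq] by simp
  also have "\<dots> = lp m" using lp_ge[of m] by (simp add: max_def)
  finally show ?thesis .
qed



definition dS1 :: "nat \<Rightarrow> nat" where "dS1 v = (if v = 0 then 1 else 0)"
definition dS2 :: "nat \<Rightarrow> nat" where "dS2 v = (if v = 1 then 1 else 0)"

definition S1r :: "nat \<Rightarrow> 'k::field rep" where
  "S1r m = \<lparr>dimv = dS1, maps = (\<lambda>a. 0\<^sub>m (dS1 (tgt (Qm m) a)) (dS1 (src (Qm m) a)))\<rparr>"
definition S2r :: "nat \<Rightarrow> 'k::field rep" where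
  "S2r m = \<lparr>dimv = dS2, maps = (\<lambda>a. 0\<^sub>m (dS2 (tgt (Qm m) a)) (dS2 (src (Qm m) a)))\<rparr>"

lemma S1r_rep: "is_rep (Qm m) (S1r m :: 'k::field rep)"
  unfolding is_rep_def S1r_def by (auto simp: dS1_def)

lemma S2r_rep: "is_rep (Qm m) (S2r m :: 'k::field rep)"
  unfolding is_rep_def S2r_def by (auto simp: dS2_def)

lemma S1r_is: "isS1 m (S1r m :: 'k::field rep)"
  unfolding isS1_def zmaps_def using S1r_rep by (auto simp: S1r_def dS1_def)

lemma S2r_is: "isS2 m (S2r m :: 'k::field rep)"
  unfolding isS2_def zmaps_def using S2r_rep by (auto simp: S2r_def dS2_def)

lemma S1r_homs: "homs (Qm m) (S1r m :: 'k::field rep) (S1r m) = {(\<lambda>v i j. if v < nverts (Qm m) \<and> i < dimv (S1r m :: 'k rep) v \<and> i = j then c else 0) | c. True}"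
proof -
  have z: "zmaps (Qm m) (S1r m :: 'k rep)" by (rule S1_z[OF S1r_is])
  show ?thesis unfolding homs_zero[OF z z]
  proof (intro Set.set_eqI iffI)
    fix f :: "nat \<Rightarrow> nat \<Rightarrow> nat \<Rightarrow> 'k"
    assume f: "f \<in> {f. \<forall>v i j. \<not> (v < nverts (Qm m) \<and> i < dimv (S1r m :: 'k rep) v \<and> j < dimv (S1r m :: 'k rep) v) \<longrightarrow> f v i j = 0}"
    have "f = (\<lambda>v i j. if v < nverts (Qm m) \<and> i < dimv (S1r m :: 'k rep) v \<and> i = j then f 0 0 0 else 0)"
    proof (intro ext)
      fix v i j
      show "f v i j = (if v < nverts (Qm m) \<and> i < dimv (S1r m :: 'k rep) v \<and> i = j then f 0 0 0 else 0)"
        using f by (cases "v = 0 \<and> i = 0 \<and> j = 0") (auto simp: S1r_def dS1_def)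
    qed
    then show "f \<in> {(\<lambda>v i j. if v < nverts (Qm m) \<and> i < dimv (S1r m :: 'k rep) v \<and> i = j then c else 0) | c. True}"
      by blast
  next
    fix f :: "nat \<Rightarrow> nat \<Rightarrow> nat \<Rightarrow> 'k"
    assume "f \<in> {(\<lambda>v i j. if v < nverts (Qm m) \<and> i < dimv (S1r m :: 'k rep) v \<and> i = j then c else 0) | c. True}"
    then show "f \<in> {f. \<forall>v i j. \<not> (v < nverts (Qm m) \<and> i < dimv (S1r m :: 'k rep) v \<and> j < dimv (S1r m :: 'k rep) v) \<longrightarrow> f v i j = 0}"
      by auto
  qed
qed

lemma S1r_brick: "brick (Qm m) (S1r m :: 'k::field rep)"
  unfolding brick_def using S1r_rep S1r_homs by (auto simp: nonzero_rep_def S1r_def dS1_def)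

lemma S2r_homs: "homs (Qm m) (S2r m :: 'k::field rep) (S2r m) = {(\<lambda>v i j. if v < nverts (Qm m) \<and> i < dimv (S2r m :: 'k rep) v \<and> i = j then c else 0) | c. True}"
proof -
  have z: "zmaps (Qm m) (S2r m :: 'k rep)" by (rule S2_z[OF S2r_is])
  show ?thesis unfolding homs_zero[OF z z]
  proof (intro Set.set_eqI iffI)
    fix f :: "nat \<Rightarrow> nat \<Rightarrow> nat \<Rightarrow> 'k"
    assume f: "f \<in> {f. \<forall>v i j. \<not> (v < nverts (Qm m) \<and> i < dimv (S2r m :: 'k rep) v \<and> j < dimv (S2r m :: 'k rep) v) \<longrightarrow> f v i j = 0}"
    have "f = (\<lambda>v i j. if v < nverts (Qm m) \<and> i < dimv (S2r m :: 'k rep) v \<and> i = j then f 1 0 0 else 0)"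
    proof (intro ext)
      fix v i j
      show "f v i j = (if v < nverts (Qm m) \<and> i < dimv (S2r m :: 'k rep) v \<and> i = j then f 1 0 0 else 0)"
        using f by (cases "v = 1 \<and> i = 0 \<and> j = 0") (auto simp: S2r_def dS2_def)
    qed
    then show "f \<in> {(\<lambda>v i j. if v < nverts (Qm m) \<and> i < dimv (S2r m :: 'k rep) v \<and> i = j then c else 0) | c. True}"
      by blast
  next
    fix f :: "nat \<Rightarrow> nat \<Rightarrow> nat \<Rightarrow> 'k"
    assume "f \<in> {(\<lambda>v i j. if v < nverts (Qm m) \<and> i < dimv (S2r m :: 'k rep) v \<and> i = j then c else 0) | c. True}"
    then show "f \<in> {f. \<forall>v i j. \<not> (v < nverts (Qm m) \<and> i < dimv (S2r m :: 'k rep) v \<and> j < dimv (S2r m :: 'k rep) v) \<longrightarrow> f v i j = 0}"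
      by auto
  qed
qed

lemma S2r_brick: "brick (Qm m) (S2r m :: 'k::field rep)"
  unfolding brick_def using S2r_rep S2r_homs by (auto simp: nonzero_rep_def S2r_def dS2_def)

lemma hom_S1r_S2r: "hom_dim (Qm m) (S1r m :: 'k::field rep) (S2r m) = 0"
proof -
  have z1: "zmaps (Qm m) (S1r m :: 'k rep)" by (rule S1_z[OF S1r_is])
  have z2: "zmaps (Qm m) (S2r m :: 'k rep)" by (rule S2_z[OF S2r_is])
  show ?thesis unfolding hom_dim_def homs_zero[OF z1 z2]
  proof (rule kdim_zero, rule subsetI)
    fix f :: "nat \<Rightarrow> nat \<Rightarrow> nat \<Rightarrow> 'k"
    assume f: "f \<in> {f. \<forall>v i j. \<not> (v < nverts (Qm m) \<and> i < dimv (S2r m :: 'k rep) v \<and> j < dimv (S1r m :: 'k rep) v) \<longrightarrow> f v i j = 0}"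
    have "f v i j = 0" for v i j using f by (auto simp: S1r_def S2r_def dS1_def dS2_def)
    then show "f \<in> {0}" by (auto simp: fun_eq_iff)
  qed
qed

lemma hom_S2r_S1r: "hom_dim (Qm m) (S2r m :: 'k::field rep) (S1r m) = 0"
proof -
  have z1: "zmaps (Qm m) (S1r m :: 'k rep)" by (rule S1_z[OF S1r_is])
  have z2: "zmaps (Qm m) (S2r m :: 'k rep)" by (rule S2_z[OF S2r_is])
  show ?thesis unfolding hom_dim_def homs_zero[OF z2 z1]
  proof (rule kdim_zero, rule subsetI)
    fix f :: "nat \<Rightarrow> nat \<Rightarrow> nat \<Rightarrow> 'k"
    assume f: "f \<in> {f. \<forall>v i j. \<not> (v < nverts (Qm m) \<and> i < dimv (S1r m :: 'k rep) v \<and> j < dimv (S2r m :: 'k rep) v) \<longrightarrow> f v i j = 0}"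
    have "f v i j = 0" for v i j using f by (auto simp: S1r_def S2r_def dS1_def dS2_def)
    then show "f \<in> {0}" by (auto simp: fun_eq_iff)
  qed
qed

lemma bs_S: "brick_set (Qm m) [S1r m :: 'k::field rep, S2r m]"
  unfolding brick_set_def
proof (intro conjI ballI allI impI)
  show "[S1r m :: 'k rep, S2r m] \<noteq> []" by simp
next
  fix X :: "'k rep" assume "X \<in> set [S1r m, S2r m]"
  then show "brick (Qm m) X" using S1r_brick S2r_brick by auto
next
  fix i j assume "i < length [S1r m :: 'k rep, S2r m]" "j < length [S1r m :: 'k rep, S2r m]" "i \<noteq> j"
  then have "(i = 0 \<and> j = 1) \<or> (i = 1 \<and> j = 0)" by auto
  then show "hom_dim (Qm m) ([S1r m :: 'k rep, S2r m] ! i) ([S1r m, S2r m] ! j) = 0"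
    using hom_S1r_S2r hom_S2r_S1r by auto
qed

lemma adj_S12: "isS1 m X \<Longrightarrow> isS2 m Y \<Longrightarrow> adj_mat (Qm m) [X,Y] = M2 (of_nat m) 0"
  unfolding adj_mat_def M2_def
  by (rule eq_matI) (auto simp: less_2_cases_iff ext_S1_S1 ext_S1_S2 ext_S2_S1 ext_S2_S2)

lemma adj_S21: "isS2 m X \<Longrightarrow> isS1 m Y \<Longrightarrow> adj_mat (Qm m) [X,Y] = M2 0 (of_nat m)"
  unfolding adj_mat_def M2_def
  by (rule eq_matI) (auto simp: less_2_cases_iff ext_S1_S1 ext_S1_S2 ext_S2_S1 ext_S2_S2)

lemma adj_single: "adj_mat Q [X] = mat 1 1 (\<lambda>_. of_nat (ext1_dim Q X X))"
  unfolding adj_mat_def by (rule eq_matI) auto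

lemma S_excl: "isS1 m X \<Longrightarrow> isS2 m X \<Longrightarrow> False"
  by (simp add: isS1_def isS2_def)

lemma upper:
  assumes m: "m \<ge> 1" and bs: "brick_set (Qm m) Xs"
  shows "spectral_radius (adj_mat (Qm m) Xs) \<le> lp m"
proof -
  have ne: "Xs \<noteq> []" and br: "\<And>X. X \<in> set Xs \<Longrightarrow> brick (Qm m) X"
    and hz: "\<And>i j. i < length Xs \<Longrightarrow> j < length Xs \<Longrightarrow> i \<noteq> j \<Longrightarrow> hom_dim (Qm m) (Xs ! i) (Xs ! j) = 0"
    using bs unfolding brick_set_def by auto
  have lp1: "real m \<le> lp m" using lp_ge(1) .
  show ?thesis
  proof (cases "length Xs = 1")
    case True
    then obtain X where X: "Xs = [X]" by (metis One_nat_def length_0_conv length_Suc_conv)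
    have bX: "brick (Qm m) X" using br X by simp
    have "ext1_dim (Qm m) X X \<le> m"
      using classify[OF bX]
    proof (elim disjE exE)
      assume "isS1 m X" then show ?thesis using ext_S1_S1[of m X X] by simp
    next
      assume "isS2 m X" then show ?thesis using ext_S2_S2[of m X X] by simp
    next
      fix g assume "isP m X g" then show ?thesis using ext_P[of m X g] m by linarith
    next
      fix g assume "isN m X g" then show ?thesis using ext_N[of m X g] m by linarith
    qed
    then have "real (ext1_dim (Qm m) X X) \<le> lp m" using lp1 by linarith
    then show ?thesis unfolding X adj_single sr_1x1 by simp
  next
    case False
    moreover have "length Xs \<noteq> 0" using ne by simp
    ultimately have len: "length Xs \<ge> 2" by linarith
    define X where "X = Xs ! 0"
    define Y where "Y = Xs ! 1"
    have bX: "brick (Qm m) X" using br[OF nth_mem[of 0 Xs]] ne by (simp add: X_def)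
    have bY: "brick (Qm m) Y" using br[OF nth_mem[of 1 Xs]] len by (simp add: Y_def)
    have c: "(isS1 m X \<and> isS2 m Y) \<or> (isS2 m X \<and> isS1 m Y)"
      using compat[OF bX bY] hz[of 0 1] hz[of 1 0] len ne by (auto simp: X_def Y_def)
    have len2: "length Xs = 2"
    proof (rule ccontr)
      assume "length Xs \<noteq> 2"
      then have len3: "length Xs > 2" using len by simp
      define Z where "Z = Xs ! 2"
      have bZ: "brick (Qm m) Z" using br[OF nth_mem[of 2 Xs]] len3 by (simp add: Z_def)
      have c1: "(isS1 m X \<and> isS2 m Z) \<or> (isS2 m X \<and> isS1 m Z)"
        using compat[OF bX bZ] hz[of 0 2] hz[of 2 0] len3 ne by (auto simp: X_def Z_def)
      have c2: "(isS1 m Y \<and> isS2 m Z) \<or> (isS2 m Y \<and> isS1 m Z)"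
        using compat[OF bY bZ] hz[of 1 2] hz[of 2 1] len3 ne by (auto simp: Y_def Z_def)
      show False using c c1 c2 S_excl[of m X] S_excl[of m Y] S_excl[of m Z] by blast
    qed
    then have XY: "Xs = [X, Y]" unfolding X_def Y_def
      by (cases Xs; cases "tl Xs"; auto)
    show ?thesis
    proof (cases "isS1 m X \<and> isS2 m Y")
      case True
      then show ?thesis unfolding XY adj_S12[OF conjunct1[OF True] conjunct2[OF True]]
        using sr_M2[of "of_nat m" 0 m] by simp
    next
      case False
      then have XY2: "isS2 m X \<and> isS1 m Y" using c by blast
      show ?thesis unfolding XY adj_S21[OF conjunct1[OF XY2] conjunct2[OF XY2]]
        using sr_M2[of 0 "of_nat m" m] by simp
    qed
  qed
qed

lemma fpd_Qm:
  assumes m: "m \<ge> 1"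
  shows "fpd TYPE('k::field) (Qm m) = ereal (lp m)"
  unfolding fpd_def
proof (rule antisym)
  show "(SUP Xs \<in> {Xs :: 'k rep list. brick_set (Qm m) Xs}. ereal (spectral_radius (adj_mat (Qm m) Xs))) \<le> ereal (lp m)"
    by (rule SUP_least) (use upper[OF m] in auto)
next
  have "ereal (lp m) = ereal (spectral_radius (adj_mat (Qm m) [S1r m :: 'k rep, S2r m]))"
    unfolding adj_S12[OF S1r_is S2r_is] using sr_M2[of "of_nat m" 0 m] by simp
  also have "\<dots> \<le> (SUP Xs \<in> {Xs :: 'k rep list. brick_set (Qm m) Xs}. ereal (spectral_radius (adj_mat (Qm m) Xs)))"
    by (rule SUP_upper) (simp add: bs_S)
  finally show "ereal (lp m) \<le> (SUP Xs \<in> {Xs :: 'k rep list. brick_set (Qm m) Xs}. ereal (spectral_radius (adj_mat (Qm m) Xs)))" .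
qed

lemma lp_irrat: assumes m: "m \<ge> 1" shows "lp m \<notin> \<rat>"
proof
  assume "lp m \<in> \<rat>"
  then have "2 * lp m - real m \<in> \<rat>" by (intro Rats_diff Rats_mult) auto
  moreover have "2 * lp m - real m = sqrt (real (m^2 + 4))" unfolding lp_def by (simp add: field_simps)
  ultimately obtain k where "m^2 + 4 = k^2" using sqrt_rat_square by metis
  then show False using not_square[OF m] by simp
qed

theorem proposition1p4:
  fixes r :: real
  assumes "alg_closed TYPE('k::field)"
    and "r \<ge> 0"
  shows "\<exists>Q. finite_quiver Q \<and>
           (\<exists>x. fpd TYPE('k) Q = ereal x \<and> x \<notin> \<rat> \<and> x > r)"
proof -
  define m where "m = nat \<lceil>r\<rceil> + 1"
  have m1: "m \<ge> 1" by (simp add: m_def)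
  have "r < real m" unfolding m_def by linarith
  also have "\<dots> \<le> lp m" by (rule lp_ge(1))
  finally have "r < lp m" .
  then show ?thesis using Qm_finite[of m] fpd_Qm[OF m1] lp_irrat[OF m1] by blast
qed


end
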